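(* Let $(\mathcal{T},\mathcal{F},\mathcal{S})$ be a tree of fusion systems satisfying Hypothesis $(H)$ with distinguished vertex $v_*$, and put $S:=\mathcal{S}(v_* )$ (with all $\mathcal{S}(v)$, $\mathcal{S}(e)$ identified with subgroups of $S$ as described in the context). Let $$\mathcal{F}_\mathcal{T}:=\langle \operatorname{Hom}_{\mathcal{F}(v)}(P,\mathcal{S}(v)) \mid P\le \mathcal{S}(v),\ v\in V(\mathcal{T})\rangle_S .$$ Then $\mathcal{F}_\mathcal{T}$ (together with the inclusions $\mathcal{S}(v)\hookrightarrow S$, $\mathcal{S}(e)\hookrightarrow S$) is a colimit of the functor $\mathcal{F}$ in the category of fusion systems. Moreover, every $\alpha\in\operatorname{Hom}_{\mathcal{F}_\mathcal{T}}(P,S)$ can be written as a composite $$P=P_0\xrightarrow{\alpha_0}P_1\xrightarrow{\alpha_1}\cdots\xrightarrow{\alpha_{n-1}}P_n=P\alpha,$$ where there are vertices $v_0,\dots,v_{n-1}$ of $\mathcal{T}$ with $v_i$ and $v_{i+1}$ adjacent in $\mathcal{T}$ for $0\le i\le n-2$, $P_i,P_{i+1}\le \mathcal{S}(v_i)$ and $\alpha_i\in\operatorname{Hom}_{\mathcal{F}(v_i)}(P_i,P_{i+1})$ for each $i$.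
   Context: Conventions: homomorphisms act on the right ($x\varphi$), and $\alpha\circ\beta$ means "first $\alpha$, then $\beta$". $\iota_P^Q$ denotes inclusion $P\hookrightarrow Q$. A fusion system $\mathcal{F}$ on a finite $p$-group $S$ is a category whose objects are the subgroups of $S$, with $\operatorname{Hom}_S(P,Q)\subseteq\operatorname{Hom}_\mathcal{F}(P,Q)\subseteq\operatorname{Inj}(P,Q)$ (conjugation maps by elements of $S$, resp. all injective homomorphisms), such that each morphism factors as an $\mathcal{F}$-isomorphism onto its image followed by an inclusion. For a set $\mathcal{C}$ of injective maps between subgroups of $S$, $\langle\mathcal{C}\rangle_S$ is the smallest fusion system on $S$ containing $\mathcal{C}$. A morphism from a fusion system $\mathcal{F}$ on $S$ to a fusion system $\mathcal{E}$ on $T$ is a homomorphism $\varphi:S\to T$ such that for all $P,R\le S$ and $\alpha\in\operatorname{Hom}_\mathcal{F}(P,R)$ there is $\beta\in\operatorname{Hom}_\mathcal{E}(P\varphi,R\varphi)$ with $\alpha\circ\varphi|_R=\varphi|_P\circ\beta$; it is injective if the induced maps $\operatorname{Hom}_\mathcal{F}(P,S)\to\operatorname{Hom}_\mathcal{E}(P\varphi,T)$ are injective. This gives the category of fusion systems. A finite tree $\mathcal{T}$ is regarded as a category whose objects are its vertices and edges, with a unique morphism $f_{ev}:e\to v$ whenever vertex $v$ is incident on edge $e$. A tree of fusion systems $(\mathcal{T},\mathcal{F},\mathcal{S})$ consists of a finite tree $\mathcal{T}$, a functor $\mathcal{S}$ from $\mathcal{T}$ to groups assigning finite $p$-groups $\mathcal{S}(v),\mathcal{S}(e)$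 and sending each $f_{ev}$ to a monomorphism $\mathcal{S}(e)\to\mathcal{S}(v)$, and a functor $\mathcal{F}$ assigning a fusion system $\mathcal{F}(v)$ on $\mathcal{S}(v)$ and $\mathcal{F}(e)$ on $\mathcal{S}(e)$, such that $\mathcal{S}(f_{ev})$ is an injective morphism of fusion systems $\mathcal{F}(e)\to\mathcal{F}(v)$. Hypothesis $(H)$: there is a vertex $v_*$ such that for every vertex $v\ne v_*$, if $e$ is the edge incident on $v$ lying on the unique minimal path from $v$ to $v_*$, then $\mathcal{S}(f_{ev}):\mathcal{S}(e)\to\mathcal{S}(v)$ is an isomorphism. Under $(H)$, using these isomorphisms and the maps $\mathcal{S}(f_{ev})$, every $\mathcal{S}(v)$ and $\mathcal{S}(e)$ is identified with a subgroup of $S=\mathcal{S}(v_* )$ (which is the colimit of $\mathcal{S}$) so that all $\mathcal{S}(f_{ev})$ become inclusions, and each $\mathcal{F}(e)$ becomes a subsystem of $\mathcal{F}(v)$ for $v$ incident on $e$. *)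

theory Defs
  imports "HOL-Algebra.Algebra"
begin

text \<open>Maps act on the right in the paper;
  here a map phi is an HOL function, and "first phi then psi" is psi o phi.
  Morphisms between subgroups are extensional functions (undefined outside the domain).\<close>

definition is_p_group :: "nat \<Rightarrow> 'a set \<Rightarrow> bool" where
  "is_p_group p S \<longleftrightarrow> Factorial_Ring.prime p \<and> finite S \<and> (\<exists>n. card S = p ^ n)"

definition conj_homs :: "('a, 'm) monoid_scheme \<Rightarrow> 'a set \<Rightarrow> 'a set \<Rightarrow> 'a set \<Rightarrow> ('a \<Rightarrow> 'a) set" where
  "conj_homs G S P Q =
     {restrict (\<lambda>x. inv\<^bsub>G\<^esub> s \<otimes>\<^bsub>G\<^esub> x \<otimes>\<^bsub>G\<^esub> s) P | s.
        s \<in> S \<and> (\<forall>x\<in>P. inv\<^bsub>G\<^esub> s \<otimes>\<^bsub>G\<^esub> x \<otimes>\<^bsub>G\<^esub> s \<in> Q)}"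

definition inj_homs :: "('a, 'm) monoid_scheme \<Rightarrow> 'a set \<Rightarrow> 'a set \<Rightarrow> ('a \<Rightarrow> 'a) set" where
  "inj_homs G P Q =
     {\<phi>. \<phi> \<in> hom (G\<lparr>carrier := P\<rparr>) (G\<lparr>carrier := Q\<rparr>) \<and> inj_on \<phi> P \<and> \<phi> \<in> extensional P}"

definition is_sub :: "('a, 'm) monoid_scheme \<Rightarrow> 'a set \<Rightarrow> 'a set \<Rightarrow> bool" where
  "is_sub G S P \<longleftrightarrow> subgroup P G \<and> P \<subseteq> S"

text \<open>Category: closed under composition (identities are in Hom_S);
  every morphism is an F-isomorphism onto its image (whose inverse lies in F)
  followed by an inclusion.\<close>
definition fusion_system ::
  "nat \<Rightarrow> ('a, 'm) monoid_scheme \<Rightarrow> 'a set \<Rightarrow> ('a set \<Rightarrow> 'a set \<Rightarrow> ('a \<Rightarrow> 'a) set) \<Rightarrow> bool" where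
  "fusion_system p G S F \<longleftrightarrow>
     group G \<and> subgroup S G \<and> is_p_group p S \<and>
     (\<forall>P Q. \<not> (is_sub G S P \<and> is_sub G S Q) \<longrightarrow> F P Q = {}) \<and>
     (\<forall>P Q. is_sub G S P \<and> is_sub G S Q \<longrightarrow>
        conj_homs G S P Q \<subseteq> F P Q \<and> F P Q \<subseteq> inj_homs G P Q) \<and>
     (\<forall>P Q R \<phi> \<psi>. \<phi> \<in> F P Q \<longrightarrow> \<psi> \<in> F Q R \<longrightarrow> restrict (\<psi> \<circ> \<phi>) P \<in> F P R) \<and>
     (\<forall>P Q \<phi>. \<phi> \<in> F P Q \<longrightarrow>
        \<phi> \<in> F P (\<phi> ` P) \<and> restrict (inv_into P \<phi>) (\<phi> ` P) \<in> F (\<phi> ` P) P)"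

definition generated_fs ::
  "nat \<Rightarrow> ('a, 'm) monoid_scheme \<Rightarrow> 'a set \<Rightarrow> ('a set \<Rightarrow> 'a set \<Rightarrow> ('a \<Rightarrow> 'a) set)
   \<Rightarrow> ('a set \<Rightarrow> 'a set \<Rightarrow> ('a \<Rightarrow> 'a) set)" where
  "generated_fs p G S C = (\<lambda>P Q. \<Inter> {F P Q | F. fusion_system p G S F \<and> (\<forall>P' Q'. C P' Q' \<subseteq> F P' Q')})"

definition fs_morphism ::
  "('a, 'm) monoid_scheme \<Rightarrow> 'a set \<Rightarrow> ('a set \<Rightarrow> 'a set \<Rightarrow> ('a \<Rightarrow> 'a) set) \<Rightarrow>
   ('b, 'n) monoid_scheme \<Rightarrow> 'b set \<Rightarrow> ('b set \<Rightarrow> 'b set \<Rightarrow> ('b \<Rightarrow> 'b) set) \<Rightarrow> ('a \<Rightarrow> 'b) \<Rightarrow> bool" where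
  "fs_morphism G S F H T E \<phi> \<longleftrightarrow>
     \<phi> \<in> hom (G\<lparr>carrier := S\<rparr>) (H\<lparr>carrier := T\<rparr>) \<and>
     (\<forall>P R \<alpha>. is_sub G S P \<and> is_sub G S R \<and> \<alpha> \<in> F P R \<longrightarrow>
        (\<exists>\<beta> \<in> E (\<phi> ` P) (\<phi> ` R). \<forall>x\<in>P. \<phi> (\<alpha> x) = \<beta> (\<phi> x)))"

definition inj_fs_morphism ::
  "('a, 'm) monoid_scheme \<Rightarrow> 'a set \<Rightarrow> ('a set \<Rightarrow> 'a set \<Rightarrow> ('a \<Rightarrow> 'a) set) \<Rightarrow>
   ('b, 'n) monoid_scheme \<Rightarrow> 'b set \<Rightarrow> ('b set \<Rightarrow> 'b set \<Rightarrow> ('b \<Rightarrow> 'b) set) \<Rightarrow> ('a \<Rightarrow> 'b) \<Rightarrow> bool" where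
  "inj_fs_morphism G S F H T E \<phi> \<longleftrightarrow>
     fs_morphism G S F H T E \<phi> \<and>
     (\<forall>P \<alpha>1 \<alpha>2 \<beta>. is_sub G S P \<and> \<alpha>1 \<in> F P S \<and> \<alpha>2 \<in> F P S \<and> \<beta> \<in> E (\<phi> ` P) T \<and>
        (\<forall>x\<in>P. \<phi> (\<alpha>1 x) = \<beta> (\<phi> x)) \<and> (\<forall>x\<in>P. \<phi> (\<alpha>2 x) = \<beta> (\<phi> x)) \<longrightarrow> \<alpha>1 = \<alpha>2)"

definition adj_rel :: "'v set set \<Rightarrow> ('v \<times> 'v) set" where
  "adj_rel Ed = {(u, w). {u, w} \<in> Ed}"

definition is_tree :: "'v set \<Rightarrow> 'v set set \<Rightarrow> bool" where
  "is_tree V Ed \<longleftrightarrow> finite V \<and> V \<noteq> {} \<and> (\<forall>e\<in>Ed. e \<subseteq> V \<and> card e = 2) \<and>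
     (\<forall>u\<in>V. \<forall>w\<in>V. (u, w) \<in> (adj_rel Ed)\<^sup>*) \<and> card Ed + 1 = card V"

definition is_walk :: "'v set set \<Rightarrow> 'v list \<Rightarrow> bool" where
  "is_walk Ed xs \<longleftrightarrow> xs \<noteq> [] \<and> (\<forall>i. Suc i < length xs \<longrightarrow> {xs ! i, xs ! Suc i} \<in> Ed)"

definition min_path :: "'v set set \<Rightarrow> 'v \<Rightarrow> 'v \<Rightarrow> 'v list \<Rightarrow> bool" where
  "min_path Ed u w xs \<longleftrightarrow> is_walk Ed xs \<and> hd xs = u \<and> last xs = w \<and>
     (\<forall>ys. is_walk Ed ys \<and> hd ys = u \<and> last ys = w \<longrightarrow> length xs \<le> length ys)"

text \<open>All S(v), S(e) are subgroups of S = S(v_star) inside an ambient group G, the structure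
  maps S(f_ev) are inclusions, and each inclusion S(e) -> S(v) is an injective morphism of
  fusion systems F(e) -> F(v). Hypothesis (H): for v other than v_star, the edge incident
  on v on the minimal path to v_star has S(e) = S(v).\<close>
definition tree_fs_H ::
  "nat \<Rightarrow> ('a, 'm) monoid_scheme \<Rightarrow> 'v set \<Rightarrow> 'v set set \<Rightarrow> 'v \<Rightarrow>
   ('v \<Rightarrow> 'a set) \<Rightarrow> ('v set \<Rightarrow> 'a set) \<Rightarrow>
   ('v \<Rightarrow> 'a set \<Rightarrow> 'a set \<Rightarrow> ('a \<Rightarrow> 'a) set) \<Rightarrow> ('v set \<Rightarrow> 'a set \<Rightarrow> 'a set \<Rightarrow> ('a \<Rightarrow> 'a) set) \<Rightarrow> bool" where
  "tree_fs_H p G V Ed vs Sv Se Fv Fe \<longleftrightarrow>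
     group G \<and> is_tree V Ed \<and> vs \<in> V \<and>
     (\<forall>v\<in>V. Sv v \<subseteq> Sv vs) \<and>
     (\<forall>v\<in>V. fusion_system p G (Sv v) (Fv v)) \<and>
     (\<forall>e\<in>Ed. fusion_system p G (Se e) (Fe e)) \<and>
     (\<forall>e\<in>Ed. \<forall>v\<in>e. Se e \<subseteq> Sv v \<and> inj_fs_morphism G (Se e) (Fe e) G (Sv v) (Fv v) (\<lambda>x. x)) \<and>
     (\<forall>v\<in>V - {vs}. \<forall>xs. min_path Ed v vs xs \<longrightarrow> Se {xs ! 0, xs ! 1} = Sv v)"

fun chain_comp :: "(nat \<Rightarrow> 'a \<Rightarrow> 'a) \<Rightarrow> nat \<Rightarrow> 'a \<Rightarrow> 'a" where
  "chain_comp as 0 = (\<lambda>x. x)"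
| "chain_comp as (Suc n) = as n \<circ> chain_comp as n"

end

theory Submission
  imports Defs
begin

lemma inj_homs_iff:
  "\<phi> \<in> inj_homs G P Q \<longleftrightarrow> \<phi> \<in> extensional P \<and> \<phi> ` P \<subseteq> Q \<and>
     (\<forall>x\<in>P. \<forall>y\<in>P. \<phi> (x \<otimes>\<^bsub>G\<^esub> y) = \<phi> x \<otimes>\<^bsub>G\<^esub> \<phi> y) \<and> inj_on \<phi> P"
  unfolding inj_homs_def hom_def by (auto simp: Pi_def)

lemma inj_homs_comp:
  assumes "\<phi> \<in> inj_homs G P Q" "\<psi> \<in> inj_homs G Q R"
    "\<And>x y. x \<in> P \<Longrightarrow> y \<in> P \<Longrightarrow> x \<otimes>\<^bsub>G\<^esub> y \<in> P"
  shows "restrict (\<psi> \<circ> \<phi>) P \<in> inj_homs G P R"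
  using assms unfolding inj_homs_iff
  by (auto simp: inj_on_def image_subset_iff)

lemma inj_homs_image:
  assumes "\<phi> \<in> inj_homs G P Q" shows "\<phi> \<in> inj_homs G P (\<phi> ` P)"
  using assms unfolding inj_homs_iff by auto

lemma inj_homs_inv:
  assumes "\<phi> \<in> inj_homs G P Q" "\<And>x y. x \<in> P \<Longrightarrow> y \<in> P \<Longrightarrow> x \<otimes>\<^bsub>G\<^esub> y \<in> P"
  shows "restrict (inv_into P \<phi>) (\<phi> ` P) \<in> inj_homs G (\<phi> ` P) P"
proof -
  have i: "inj_on \<phi> P" "\<forall>x\<in>P. \<forall>y\<in>P. \<phi> (x \<otimes>\<^bsub>G\<^esub> y) = \<phi> x \<otimes>\<^bsub>G\<^esub> \<phi> y"
    using assms(1) unfolding inj_homs_iff by auto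
  show ?thesis unfolding inj_homs_iff
  proof (intro conjI ballI)
    show "restrict (inv_into P \<phi>) (\<phi> ` P) ` \<phi> ` P \<subseteq> P" using i by auto
    fix a b assume ab: "a \<in> \<phi> ` P" "b \<in> \<phi> ` P"
    then obtain x y where xy: "x \<in> P" "y \<in> P" "a = \<phi> x" "b = \<phi> y" by auto
    have m: "a \<otimes>\<^bsub>G\<^esub> b = \<phi> (x \<otimes>\<^bsub>G\<^esub> y)" using i xy by auto
    have xyP: "x \<otimes>\<^bsub>G\<^esub> y \<in> P" using assms(2) xy by auto
    have "a \<otimes>\<^bsub>G\<^esub> b \<in> \<phi> ` P" using m xyP by blast
    then show "restrict (inv_into P \<phi>) (\<phi> ` P) (a \<otimes>\<^bsub>G\<^esub> b) =
        restrict (inv_into P \<phi>) (\<phi> ` P) a \<otimes>\<^bsub>G\<^esub> restrict (inv_into P \<phi>) (\<phi> ` P) b"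
    proof -
      have e1: "inv_into P \<phi> (a \<otimes>\<^bsub>G\<^esub> b) = x \<otimes>\<^bsub>G\<^esub> y" by (metis inv_into_f_f i(1) m xyP)
      have e2: "inv_into P \<phi> a = x" "inv_into P \<phi> b = y" using xy i(1) by (auto simp: inv_into_f_f)
      show ?thesis using ab \<open>a \<otimes>\<^bsub>G\<^esub> b \<in> \<phi> ` P\<close> e1 e2 by (simp only: restrict_apply')
    qed
  next
    show "inj_on (restrict (inv_into P \<phi>) (\<phi> ` P)) (\<phi> ` P)"
      using i by (auto simp: inj_on_def)
  qed auto
qed

lemma image_subgroup:
  fixes G (structure)
  assumes G: "group G" and P: "subgroup P G" and Q: "subgroup Q G" and phi: "\<phi> \<in> inj_homs G P Q"
  shows "subgroup (\<phi> ` P) G"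
proof -
  interpret group G by fact
  have h: "\<phi> ` P \<subseteq> Q" "\<forall>x\<in>P. \<forall>y\<in>P. \<phi> (x \<otimes> y) = \<phi> x \<otimes> \<phi> y"
    using phi unfolding inj_homs_iff by auto
  have PC: "P \<subseteq> carrier G" "Q \<subseteq> carrier G" using P Q subgroup.subset by auto
  have hc: "\<And>x. x \<in> P \<Longrightarrow> \<phi> x \<in> carrier G" using h PC by auto
  have one1: "\<one> \<in> P" using P subgroup.one_closed by blast
  have one: "\<phi> \<one> = \<one>"
  proof -
    have c: "\<phi> \<one> \<in> carrier G" using hc one1 by auto
    have e: "\<phi> (\<one> \<otimes> \<one>) = \<phi> \<one> \<otimes> \<phi> \<one>" using h one1 by blast
    have o: "\<one> \<otimes> \<one> = \<one>" by simp
    have "\<phi> \<one> \<otimes> \<phi> \<one> = \<phi> \<one>" using e unfolding o by (rule sym)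
    then have "\<phi> \<one> \<otimes> \<phi> \<one> = \<phi> \<one> \<otimes> \<one>" using c by simp
    then show ?thesis using c l_cancel[of "\<phi> \<one>" "\<phi> \<one>" "\<one>"] by simp
  qed
  show ?thesis
  proof (rule subgroup.intro)
    show "\<phi> ` P \<subseteq> carrier G" using hc by auto
    show "x \<otimes> y \<in> \<phi> ` P" if xy: "x \<in> \<phi> ` P" "y \<in> \<phi> ` P" for x y
    proof -
      obtain a where a: "x = \<phi> a" "a \<in> P" using xy(1) by (rule imageE)
      obtain b where b: "y = \<phi> b" "b \<in> P" using xy(2) by (rule imageE)
      note ab = a(2) b(2) a(1) b(1)
      have abP: "a \<otimes> b \<in> P" using subgroup.m_closed[OF P a(2) b(2)] .
      have eq: "x \<otimes> y = \<phi> (a \<otimes> b)" using h ab by auto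
      show ?thesis unfolding eq using abP by (rule imageI)
    qed
    have "\<phi> \<one> \<in> \<phi> ` P" using one1 by (rule imageI)
    then show "\<one> \<in> \<phi> ` P" unfolding one .
    fix x assume "x \<in> \<phi> ` P"
    then obtain y where y': "x = \<phi> y" "y \<in> P" by (rule imageE)
    note y = y'(2) y'(1)
    have iy: "inv y \<in> P" using subgroup.m_inv_closed[OF P y(1)] .
    have yc: "y \<in> carrier G" using y PC by auto
    have "\<phi> (inv y) \<otimes> \<phi> y = \<phi> (inv y \<otimes> y)" using h y iy by auto
    also have "\<dots> = \<one>" using yc one by simp
    finally have e: "\<phi> (inv y) \<otimes> \<phi> y = \<one>" .
    have "\<phi> (inv y) = inv (\<phi> y)" using inv_equality[OF e hc[OF y(1)] hc[OF iy]] by simp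
    moreover have "\<phi> (inv y) \<in> \<phi> ` P" using iy by (rule imageI)
    ultimately show "inv x \<in> \<phi> ` P" using y(2) by simp
  qed
qed

lemma subgroup_carrier: "subgroup P G \<Longrightarrow> x \<in> P \<Longrightarrow> x \<in> carrier G"
  using subgroup.subset by blast

lemma conj_one:
  fixes G (structure)
  assumes "group G" "Xa \<subseteq> carrier G"
  shows "restrict (\<lambda>x. inv \<one> \<otimes> x \<otimes> \<one>) Xa = restrict (\<lambda>x. x) Xa"
proof -
  interpret group G by fact
  show ?thesis by (rule restrict_ext) (use assms(2) in auto)
qed

locale fsys =
  fixes p and G :: "('a, 'm) monoid_scheme" and S and F
  assumes fs: "fusion_system p G S F"
begin

lemma grp: "group G" and Ssub: "subgroup S G" and pg: "is_p_group p S"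
  using fs unfolding fusion_system_def by auto

lemma sub: "\<phi> \<in> F P Q \<Longrightarrow> is_sub G S P \<and> is_sub G S Q"
  using fs unfolding fusion_system_def by blast

lemma inj: "\<phi> \<in> F P Q \<Longrightarrow> \<phi> \<in> inj_homs G P Q"
  using fs sub unfolding fusion_system_def by blast

lemma conj: "is_sub G S P \<Longrightarrow> is_sub G S Q \<Longrightarrow> conj_homs G S P Q \<subseteq> F P Q"
  using fs unfolding fusion_system_def by blast

lemma comp: "\<phi> \<in> F P Q \<Longrightarrow> \<psi> \<in> F Q R \<Longrightarrow> restrict (\<psi> \<circ> \<phi>) P \<in> F P R"
  using fs unfolding fusion_system_def by blast

lemma image: "\<phi> \<in> F P Q \<Longrightarrow> \<phi> \<in> F P (\<phi> ` P)"
  using fs unfolding fusion_system_def by blast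

lemma inv: "\<phi> \<in> F P Q \<Longrightarrow> restrict (inv_into P \<phi>) (\<phi> ` P) \<in> F (\<phi> ` P) P"
  using fs unfolding fusion_system_def by blast

lemma incl:
  assumes Xa: "is_sub G S Xa" and Ya: "is_sub G S Ya" and XY: "Xa \<subseteq> Ya"
  shows "restrict (\<lambda>x. x) Xa \<in> F Xa Ya"
proof -
  have one: "\<one>\<^bsub>G\<^esub> \<in> S" using subgroup.one_closed[OF Ssub] .
  have Xac: "\<And>x. x \<in> Xa \<Longrightarrow> x \<in> carrier G" using Xa subgroup_carrier unfolding is_sub_def by metis
  have e: "restrict (\<lambda>x. inv\<^bsub>G\<^esub> \<one>\<^bsub>G\<^esub> \<otimes>\<^bsub>G\<^esub> x \<otimes>\<^bsub>G\<^esub> \<one>\<^bsub>G\<^esub>) Xa = restrict (\<lambda>x. x) Xa"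
    by (rule conj_one[OF grp]) (use Xac in blast)
  have "restrict (\<lambda>x. inv\<^bsub>G\<^esub> \<one>\<^bsub>G\<^esub> \<otimes>\<^bsub>G\<^esub> x \<otimes>\<^bsub>G\<^esub> \<one>\<^bsub>G\<^esub>) Xa \<in> conj_homs G S Xa Ya"
  proof -
    have c: "\<And>x. x \<in> Xa \<Longrightarrow> inv\<^bsub>G\<^esub> \<one>\<^bsub>G\<^esub> \<otimes>\<^bsub>G\<^esub> x \<otimes>\<^bsub>G\<^esub> \<one>\<^bsub>G\<^esub> = x"
      using e by (metis restrict_apply')
    show ?thesis unfolding conj_homs_def using one XY c
      by (intro CollectI exI[of _ "\<one>\<^bsub>G\<^esub>"]) auto
  qed
  then show ?thesis using conj[OF Xa Ya] e by auto
qed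

lemma ext: "\<phi> \<in> F P Q \<Longrightarrow> \<phi> \<in> extensional P"
  using inj unfolding inj_homs_iff by blast

lemma into: "\<phi> \<in> F P Q \<Longrightarrow> \<phi> ` P \<subseteq> Q"
  using inj unfolding inj_homs_iff by blast

lemma image_sub: assumes "\<phi> \<in> F P Q" shows "is_sub G S (\<phi> ` P)"
  using sub[OF image[OF assms]] by blast

lemma enlarge:
  assumes phi: "\<phi> \<in> F P Q" and Ya: "is_sub G S Ya" and im: "\<phi> ` P \<subseteq> Ya"
  shows "\<phi> \<in> F P Ya"
proof -
  have a: "\<phi> \<in> F P (\<phi> ` P)" by (rule image[OF phi])
  have b: "restrict (\<lambda>x. x) (\<phi> ` P) \<in> F (\<phi> ` P) Ya"
    by (rule incl[OF image_sub[OF phi] Ya im])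
  have "restrict (restrict (\<lambda>x. x) (\<phi> ` P) \<circ> \<phi>) P = \<phi>"
    using ext[OF phi] by (auto simp: extensional_def restrict_def fun_eq_iff)
  then show ?thesis using comp[OF a b] by simp
qed

lemma restr:
  assumes phi: "\<phi> \<in> F P Q" and Xa: "is_sub G S Xa" and XP: "Xa \<subseteq> P"
  shows "restrict \<phi> Xa \<in> F Xa (\<phi> ` Xa)"
proof -
  have P: "is_sub G S P" using sub[OF phi] by blast
  have "restrict (\<phi> \<circ> restrict (\<lambda>x. x) Xa) Xa \<in> F Xa Q" by (rule comp[OF incl[OF Xa P XP] phi])
  moreover have "restrict (\<phi> \<circ> restrict (\<lambda>x. x) Xa) Xa = restrict \<phi> Xa"
    by (auto simp: restrict_def fun_eq_iff)
  ultimately have "restrict \<phi> Xa \<in> F Xa Q" by simp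
  from image[OF this] show ?thesis by simp
qed

end


lemma conj_inj:
  fixes G (structure)
  assumes G: "group G" and s: "s \<in> carrier G" and P: "P \<subseteq> carrier G"
    and Pm: "\<And>x y. x \<in> P \<Longrightarrow> y \<in> P \<Longrightarrow> x \<otimes> y \<in> P"
    and Q: "\<forall>x\<in>P. inv s \<otimes> x \<otimes> s \<in> Q"
  shows "restrict (\<lambda>x. inv s \<otimes> x \<otimes> s) P \<in> inj_homs G P Q"
proof -
  interpret group G by fact
  have Pc: "\<And>x. x \<in> P \<Longrightarrow> x \<in> carrier G" using P by blast
  have m: "inv s \<otimes> (x \<otimes> y) \<otimes> s = (inv s \<otimes> x \<otimes> s) \<otimes> (inv s \<otimes> y \<otimes> s)"
    if "x \<in> carrier G" "y \<in> carrier G" for x y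
  proof -
    have h: "s \<otimes> (inv s \<otimes> z) = z" if "z \<in> carrier G" for z
      using that s by (simp add: m_assoc[symmetric])
    show ?thesis using that s by (simp add: m_assoc h)
  qed
  have i: "x = y" if "x \<in> carrier G" "y \<in> carrier G" "inv s \<otimes> x \<otimes> s = inv s \<otimes> y \<otimes> s" for x y
    using that s by (metis inv_closed l_cancel m_closed r_cancel)
  show ?thesis unfolding inj_homs_iff
    using Q Pm by (auto simp: m Pc inj_on_def intro: i)
qed

lemma full_fs:
  fixes G :: "('a, 'm) monoid_scheme"
  assumes G: "group G" and S: "subgroup S G" and pS: "is_p_group p S"
  shows "fusion_system p G S (\<lambda>P Q. if is_sub G S P \<and> is_sub G S Q then inj_homs G P Q else {})"
    (is "fusion_system p G S ?F")
proof -
  have A2: "\<forall>P Q. \<not> (is_sub G S P \<and> is_sub G S Q) \<longrightarrow> ?F P Q = {}" by simp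
  have A3: "\<forall>P Q. is_sub G S P \<and> is_sub G S Q \<longrightarrow> conj_homs G S P Q \<subseteq> ?F P Q \<and> ?F P Q \<subseteq> inj_homs G P Q"
  proof (intro allI impI)
    fix P Q assume PQ: "is_sub G S P \<and> is_sub G S Q"
    then have P: "subgroup P G" "P \<subseteq> S" and Q: "subgroup Q G" "Q \<subseteq> S" unfolding is_sub_def by auto
    have "conj_homs G S P Q \<subseteq> inj_homs G P Q"
    proof
      fix f assume "f \<in> conj_homs G S P Q"
      then obtain s where s: "f = restrict (\<lambda>x. inv\<^bsub>G\<^esub> s \<otimes>\<^bsub>G\<^esub> x \<otimes>\<^bsub>G\<^esub> s) P" "s \<in> S"
         "\<forall>x\<in>P. inv\<^bsub>G\<^esub> s \<otimes>\<^bsub>G\<^esub> x \<otimes>\<^bsub>G\<^esub> s \<in> Q" unfolding conj_homs_def by blast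
      show "f \<in> inj_homs G P Q" unfolding s(1)
        by (rule conj_inj[OF G]) (use s P subgroup_carrier[OF S] subgroup.subset[OF P(1)] subgroup.m_closed[OF P(1)] in auto)
    qed
    then show "conj_homs G S P Q \<subseteq> ?F P Q \<and> ?F P Q \<subseteq> inj_homs G P Q" using PQ by simp
  qed
  have A4: "\<forall>P Q R \<phi> \<psi>. \<phi> \<in> ?F P Q \<longrightarrow> \<psi> \<in> ?F Q R \<longrightarrow> restrict (\<psi> \<circ> \<phi>) P \<in> ?F P R"
  proof (intro allI impI)
    fix P Q R \<phi> \<psi>
    assume a: "\<phi> \<in> ?F P Q" "\<psi> \<in> ?F Q R"
    then have "is_sub G S P" "is_sub G S R" "\<phi> \<in> inj_homs G P Q" "\<psi> \<in> inj_homs G Q R"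
      by (auto split: if_splits)
    moreover have "restrict (\<psi> \<circ> \<phi>) P \<in> inj_homs G P R"
      using calculation by (intro inj_homs_comp) (auto simp: is_sub_def intro: subgroup.m_closed)
    ultimately show "restrict (\<psi> \<circ> \<phi>) P \<in> ?F P R" by simp
  qed
  have A5: "\<forall>P Q \<phi>. \<phi> \<in> ?F P Q \<longrightarrow> \<phi> \<in> ?F P (\<phi> ` P) \<and> restrict (inv_into P \<phi>) (\<phi> ` P) \<in> ?F (\<phi> ` P) P"
  proof (intro allI impI)
    fix P Q \<phi>
    assume a: "\<phi> \<in> ?F P Q"
    then have P: "is_sub G S P" and Q: "is_sub G S Q" and f: "\<phi> \<in> inj_homs G P Q"
      by (auto split: if_splits)
    have "subgroup (\<phi> ` P) G" using image_subgroup[OF G _ _ f] P Q unfolding is_sub_def by blast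
    moreover have "\<phi> ` P \<subseteq> S" using f Q unfolding inj_homs_iff is_sub_def by blast
    ultimately have I: "is_sub G S (\<phi> ` P)" unfolding is_sub_def by blast
    have "\<phi> \<in> inj_homs G P (\<phi> ` P)" by (rule inj_homs_image[OF f])
    moreover have "restrict (inv_into P \<phi>) (\<phi> ` P) \<in> inj_homs G (\<phi> ` P) P"
      by (rule inj_homs_inv[OF f]) (use P in \<open>auto simp: is_sub_def intro: subgroup.m_closed\<close>)
    ultimately show "\<phi> \<in> ?F P (\<phi> ` P) \<and> restrict (inv_into P \<phi>) (\<phi> ` P) \<in> ?F (\<phi> ` P) P"
      using P I by simp
  qed
  show ?thesis unfolding fusion_system_def by (intro conjI) (fact G S pS A2 A3 A4 A5)+
qed


lemma gen_least:
  assumes "fusion_system p G S F" "\<forall>P Q. C P Q \<subseteq> F P Q"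
  shows "generated_fs p G S C P Q \<subseteq> F P Q"
  using assms unfolding generated_fs_def by blast

lemma gen_contains: "C P Q \<subseteq> generated_fs p G S C P Q"
  unfolding generated_fs_def by blast

lemma gen_fs:
  assumes ex: "fusion_system p G S F0" "\<forall>P Q. C P Q \<subseteq> F0 P Q"
  shows "fusion_system p G S (generated_fs p G S C)" (is "fusion_system p G S ?F")
proof -
  let ?M = "{F. fusion_system p G S F \<and> (\<forall>P' Q'. C P' Q' \<subseteq> F P' Q')}"
  have mem: "\<phi> \<in> ?F P Q \<longleftrightarrow> (\<forall>F\<in>?M. \<phi> \<in> F P Q)" for \<phi> P Q
    unfolding generated_fs_def by blast
  have F0: "F0 \<in> ?M" using ex by blast
  interpret f0: fsys p G S F0 by unfold_locales (rule ex(1))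
  have A1: "group G" "subgroup S G" "is_p_group p S" using f0.grp f0.Ssub f0.pg by auto
  have A2: "\<forall>P Q. \<not> (is_sub G S P \<and> is_sub G S Q) \<longrightarrow> ?F P Q = {}"
    using F0 mem f0.sub by blast
  have A3: "\<forall>P Q. is_sub G S P \<and> is_sub G S Q \<longrightarrow> conj_homs G S P Q \<subseteq> ?F P Q \<and> ?F P Q \<subseteq> inj_homs G P Q"
  proof (intro allI impI conjI)
    fix P Q assume PQ: "is_sub G S P \<and> is_sub G S Q"
    show "conj_homs G S P Q \<subseteq> ?F P Q"
    proof
      fix f assume "f \<in> conj_homs G S P Q"
      then have "\<forall>F\<in>?M. f \<in> F P Q" using PQ fsys.conj[OF fsys.intro] by blast
      then show "f \<in> ?F P Q" using mem by blast
    qed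
    show "?F P Q \<subseteq> inj_homs G P Q" using F0 mem f0.inj by blast
  qed
  have A4: "\<forall>P Q R \<phi> \<psi>. \<phi> \<in> ?F P Q \<longrightarrow> \<psi> \<in> ?F Q R \<longrightarrow> restrict (\<psi> \<circ> \<phi>) P \<in> ?F P R"
  proof (intro allI impI)
    fix P Q R \<phi> \<psi> assume a: "\<phi> \<in> ?F P Q" "\<psi> \<in> ?F Q R"
    have "\<forall>F\<in>?M. restrict (\<psi> \<circ> \<phi>) P \<in> F P R"
    proof
      fix F assume F: "F \<in> ?M"
      then have "\<phi> \<in> F P Q" "\<psi> \<in> F Q R" using a mem by blast+
      then show "restrict (\<psi> \<circ> \<phi>) P \<in> F P R" using F fsys.comp[OF fsys.intro] by blast
    qed
    then show "restrict (\<psi> \<circ> \<phi>) P \<in> ?F P R" using mem by blast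
  qed
  have A5: "\<forall>P Q \<phi>. \<phi> \<in> ?F P Q \<longrightarrow> \<phi> \<in> ?F P (\<phi> ` P) \<and> restrict (inv_into P \<phi>) (\<phi> ` P) \<in> ?F (\<phi> ` P) P"
  proof (intro allI impI)
    fix P Q \<phi> assume a: "\<phi> \<in> ?F P Q"
    have "\<forall>F\<in>?M. \<phi> \<in> F P (\<phi> ` P) \<and> restrict (inv_into P \<phi>) (\<phi> ` P) \<in> F (\<phi> ` P) P"
    proof
      fix F assume F: "F \<in> ?M"
      then have "\<phi> \<in> F P Q" using a mem by blast
      then show "\<phi> \<in> F P (\<phi> ` P) \<and> restrict (inv_into P \<phi>) (\<phi> ` P) \<in> F (\<phi> ` P) P"
        using F fsys.image[OF fsys.intro] fsys.inv[OF fsys.intro] by blast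
    qed
    then show "\<phi> \<in> ?F P (\<phi> ` P) \<and> restrict (inv_into P \<phi>) (\<phi> ` P) \<in> ?F (\<phi> ` P) P"
      using mem by blast
  qed
  show ?thesis unfolding fusion_system_def by (intro conjI) (fact A1 A2 A3 A4 A5)+
qed




lemma is_walk_succ: "is_walk Ed xs \<longleftrightarrow> xs \<noteq> [] \<and> successively (\<lambda>a b. {a, b} \<in> Ed) xs"
  unfolding is_walk_def successively_conv_nth by blast

lemma walk_exists:
  assumes "(u, w) \<in> (adj_rel Ed)\<^sup>*"
  shows "\<exists>xs. is_walk Ed xs \<and> hd xs = u \<and> last xs = w"
  using assms
proof (induction rule: converse_rtrancl_induct)
  case base
  then show ?case by (intro exI[of _ "[w]"]) (simp add: is_walk_succ)
next
  case (step y z)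
  then obtain xs where xs: "is_walk Ed xs" "hd xs = z" "last xs = w" by blast
  have e: "{y, z} \<in> Ed" using step(1) unfolding adj_rel_def by simp
  have "is_walk Ed (y # xs)" using xs e unfolding is_walk_succ
    by (cases xs) auto
  then show ?case using xs by (intro exI[of _ "y # xs"]) (auto simp: is_walk_succ)
qed

fun vchain :: "'v set \<Rightarrow> ('v \<Rightarrow> 'a set \<Rightarrow> 'a set \<Rightarrow> ('a \<Rightarrow> 'a) set) \<Rightarrow> 'a set \<Rightarrow> ('v \<times> 'a set \<times> ('a \<Rightarrow> 'a)) list \<Rightarrow> 'a set \<Rightarrow> bool" where
  "vchain V F P [] Q \<longleftrightarrow> Q = P"
| "vchain V F P ((v, A, a) # L) Q \<longleftrightarrow> A = P \<and> v \<in> V \<and> a \<in> F v P (a ` P) \<and> vchain V F (a ` P) L Q"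

fun ccomp :: "('v \<times> 'a set \<times> ('a \<Rightarrow> 'a)) list \<Rightarrow> 'a \<Rightarrow> 'a" where
  "ccomp [] = (\<lambda>x. x)"
| "ccomp ((v, A, a) # L) = ccomp L \<circ> a"

fun invL :: "('v \<times> 'a set \<times> ('a \<Rightarrow> 'a)) list \<Rightarrow> ('v \<times> 'a set \<times> ('a \<Rightarrow> 'a)) list" where
  "invL [] = []"
| "invL ((v, A, a) # L) = invL L @ [(v, a ` A, restrict (inv_into A a) (a ` A))]"

fun restrL :: "'a set \<Rightarrow> ('v \<times> 'a set \<times> ('a \<Rightarrow> 'a)) list \<Rightarrow> ('v \<times> 'a set \<times> ('a \<Rightarrow> 'a)) list" where
  "restrL Z [] = []"
| "restrL Z ((v, A, a) # L) = (v, Z, restrict a Z) # restrL (a ` Z) L"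

definition idL :: "'a set \<Rightarrow> 'v list \<Rightarrow> ('v \<times> 'a set \<times> ('a \<Rightarrow> 'a)) list" where
  "idL Z us = map (\<lambda>u. (u, Z, restrict (\<lambda>x. x) Z)) us"

definition Rel :: "'v set set \<Rightarrow> 'v \<Rightarrow> 'v \<Rightarrow> bool" where
  "Rel Ed a b \<longleftrightarrow> {a, b} \<in> Ed \<or> a = b"

definition good_vs :: "'v set set \<Rightarrow> 'v \<Rightarrow> 'v list \<Rightarrow> bool" where
  "good_vs Ed vs us \<longleftrightarrow> successively (Rel Ed) us \<and> (us = [] \<or> hd us = vs \<and> last us = vs)"

lemma Rel_sym: "(\<lambda>x y. Rel Ed y x) = Rel Ed"
  unfolding Rel_def by (auto simp: fun_eq_iff insert_commute)

lemma good_rev: "good_vs Ed vs (rev us) \<longleftrightarrow> good_vs Ed vs us"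
  unfolding good_vs_def successively_rev Rel_sym by (auto simp: hd_rev last_rev)

lemma good_append: "good_vs Ed vs us \<Longrightarrow> good_vs Ed vs ws \<Longrightarrow> good_vs Ed vs (us @ ws)"
  unfolding good_vs_def by (auto simp: successively_append_iff Rel_def hd_append last_append)

lemma ccomp_append: "ccomp (L1 @ L2) = ccomp L2 \<circ> ccomp L1"
proof (induction L1)
  case (Cons s L)
  obtain v A a where "s = (v, A, a)" by (cases s)
  then show ?case using Cons by auto
qed simp

lemma vchain_append: "vchain V F P (L1 @ L2) R \<longleftrightarrow> vchain V F P L1 (ccomp L1 ` P) \<and> vchain V F (ccomp L1 ` P) L2 R"
  by (induction V F P L1 R rule: vchain.induct) (auto simp: image_comp)

lemma vchain_image: "vchain V F P L Q \<Longrightarrow> ccomp L ` P = Q"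
  by (induction V F P L Q rule: vchain.induct) (auto simp: image_comp)

lemma map_fst_invL: "map fst (invL L) = rev (map fst L)"
  by (induction L rule: invL.induct) auto

lemma map_fst_restrL: "map fst (restrL Z L) = map fst L"
  by (induction Z L rule: restrL.induct) auto

lemma map_fst_idL: "map fst (idL Z us) = us"
  unfolding idL_def by (induction us) auto

lemma ccomp_idL: "x \<in> Z \<Longrightarrow> ccomp (idL Z us) x = x"
  unfolding idL_def by (induction us) auto

locale tfs =
  fixes p :: nat and G :: "('a, 'm) monoid_scheme"
    and V :: "'v set" and Ed :: "'v set set" and vs :: 'v
    and Sv :: "'v \<Rightarrow> 'a set" and Se :: "'v set \<Rightarrow> 'a set"
    and Fv :: "'v \<Rightarrow> 'a set \<Rightarrow> 'a set \<Rightarrow> ('a \<Rightarrow> 'a) set"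
    and Fe :: "'v set \<Rightarrow> 'a set \<Rightarrow> 'a set \<Rightarrow> ('a \<Rightarrow> 'a) set"
  assumes tree: "tree_fs_H p G V Ed vs Sv Se Fv Fe"
begin

lemma grp: "group G" and istree: "is_tree V Ed" and vsV: "vs \<in> V"
  and SvS: "\<And>v. v \<in> V \<Longrightarrow> Sv v \<subseteq> Sv vs"
  and fsv: "\<And>v. v \<in> V \<Longrightarrow> fusion_system p G (Sv v) (Fv v)"
  and fse: "\<And>e. e \<in> Ed \<Longrightarrow> fusion_system p G (Se e) (Fe e)"
  and edge: "\<And>e v. e \<in> Ed \<Longrightarrow> v \<in> e \<Longrightarrow> Se e \<subseteq> Sv v \<and> inj_fs_morphism G (Se e) (Fe e) G (Sv v) (Fv v) (\<lambda>x. x)"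
  and H: "\<And>v xs. v \<in> V - {vs} \<Longrightarrow> min_path Ed v vs xs \<Longrightarrow> Se {xs ! 0, xs ! 1} = Sv v"
  using tree unfolding tree_fs_H_def by auto

lemma edgeV: "e \<in> Ed \<Longrightarrow> e \<subseteq> V" and edge2: "e \<in> Ed \<Longrightarrow> card e = 2"
  and conn: "u \<in> V \<Longrightarrow> w \<in> V \<Longrightarrow> (u, w) \<in> (adj_rel Ed)\<^sup>*"
  using istree unfolding is_tree_def by auto

lemma edge_ne: "e \<in> Ed \<Longrightarrow> \<exists>v. v \<in> e"
  using edge2[of e] by (metis card.empty ex_in_conv zero_neq_numeral)

lemma fsv': "v \<in> V \<Longrightarrow> fsys p G (Sv v) (Fv v)"
  using fsv by (simp add: fsys_def)

lemma min_path_exists: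
  assumes "v \<in> V" shows "\<exists>xs. min_path Ed v vs xs"
proof -
  obtain xs where "is_walk Ed xs \<and> hd xs = v \<and> last xs = vs"
    using walk_exists[OF conn[OF assms vsV]] by blast
  from ex_has_least_nat[of "\<lambda>xs. is_walk Ed xs \<and> hd xs = v \<and> last xs = vs", OF this, of length]
  show ?thesis unfolding min_path_def by blast
qed

lemma tree_ind_aux:
  assumes base: "P vs"
    and step: "\<And>v w. v \<in> V \<Longrightarrow> v \<noteq> vs \<Longrightarrow> w \<in> V \<Longrightarrow> {v, w} \<in> Ed \<Longrightarrow> Se {v, w} = Sv v
        \<Longrightarrow> Sv v \<subseteq> Sv w \<Longrightarrow> P w \<Longrightarrow> P v"
  shows "\<forall>v xs. v \<in> V \<and> min_path Ed v vs xs \<and> length xs = n \<longrightarrow> P v"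
proof (induction n rule: less_induct)
  case (less n)
  show ?case
  proof (intro allI impI)
    fix v xs assume a: "v \<in> V \<and> min_path Ed v vs xs \<and> length xs = n"
    show "P v"
    proof (cases "v = vs")
      case True then show ?thesis using base by simp
    next
      case False
      have w: "is_walk Ed xs" "hd xs = v" "last xs = vs"
        and mn: "\<And>ys. is_walk Ed ys \<Longrightarrow> hd ys = v \<Longrightarrow> last ys = vs \<Longrightarrow> length xs \<le> length ys"
        using a unfolding min_path_def by auto
      have ne: "xs \<noteq> []" using w(1) unfolding is_walk_def by blast
      obtain w0 ys where xs: "xs = v # ys" using ne w(2) by (cases xs) auto
      have ys: "ys \<noteq> []" using xs w(3) False by auto
      obtain u zs where ys': "ys = u # zs" using ys by (cases ys) auto
      have e: "{v, u} \<in> Ed" and wys: "is_walk Ed ys"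
        using w(1) unfolding xs ys' is_walk_succ by auto
      have uV: "u \<in> V" using edgeV[OF e] by auto
      have lys: "last ys = vs" using w(3) xs ys by simp
      have hys: "hd ys = u" using ys' by simp
      have He: "Se {v, u} = Sv v" using H[of v xs] a False unfolding xs ys' by simp
      have sub: "Sv v \<subseteq> Sv u" using edge[OF e, of u] He by auto
      have mys: "min_path Ed u vs ys"
        unfolding min_path_def
      proof (intro conjI allI impI)
        fix zs' assume z: "is_walk Ed zs' \<and> hd zs' = u \<and> last zs' = vs"
        then have "is_walk Ed (v # zs')" using e unfolding is_walk_succ by (cases zs') auto
        moreover have "hd (v # zs') = v" "last (v # zs') = vs" using z unfolding is_walk_def by auto
        ultimately have "length xs \<le> length (v # zs')" using mn by blast
        then show "length ys \<le> length zs'" using xs by simp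
      qed (use wys hys lys in auto)
      have "P u" using less[rule_format, of "length ys" u ys] a xs uV mys by simp
      then show ?thesis using step[OF _ False uV e He sub] a by blast
    qed
  qed
qed

lemma tree_ind:
  assumes base: "P vs"
    and step: "\<And>v w. v \<in> V \<Longrightarrow> v \<noteq> vs \<Longrightarrow> w \<in> V \<Longrightarrow> {v, w} \<in> Ed \<Longrightarrow> Se {v, w} = Sv v
        \<Longrightarrow> Sv v \<subseteq> Sv w \<Longrightarrow> P w \<Longrightarrow> P v"
    and v: "v \<in> V"
  shows "P v"
proof -
  obtain xs where xs: "min_path Ed v vs xs" using min_path_exists[OF v] by blast
  have "\<forall>v ys. v \<in> V \<and> min_path Ed v vs ys \<and> length ys = length xs \<longrightarrow> P v"
    by (rule tree_ind_aux[of P "length xs", OF base step])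
  then show ?thesis using xs v by auto
qed


lemma SvSub: "v \<in> V \<Longrightarrow> is_sub G (Sv v) Z \<Longrightarrow> is_sub G (Sv vs) Z"
  using SvS unfolding is_sub_def by blast

lemma vchain_sub:
  "vchain V Fv P L Q \<Longrightarrow> L \<noteq> [] \<Longrightarrow> is_sub G (Sv vs) P \<and> is_sub G (Sv vs) Q"
proof (induction L arbitrary: P)
  case (Cons s L)
  obtain v A a where s: "s = (v, A, a)" by (cases s)
  have st: "A = P" "v \<in> V" "a \<in> Fv v P (a ` P)" "vchain V Fv (a ` P) L Q" using Cons(2) s by auto
  interpret fv: fsys p G "Sv v" "Fv v" by (rule fsv'[OF st(2)])
  have "is_sub G (Sv v) P" "is_sub G (Sv v) (a ` P)" using fv.sub[OF st(3)] by auto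
  then have P: "is_sub G (Sv vs) P" and aP: "is_sub G (Sv vs) (a ` P)" using SvSub st(2) by blast+
  show ?case
  proof (cases "L = []")
    case True then show ?thesis using st(4) P aP by simp
  next
    case False then show ?thesis using Cons(1)[OF st(4)] P by blast
  qed
qed simp

lemma vchain_invL:
  "vchain V Fv P L Q \<Longrightarrow> vchain V Fv Q (invL L) P \<and> (\<forall>x\<in>P. ccomp (invL L) (ccomp L x) = x)"
proof (induction L arbitrary: P)
  case (Cons s L)
  obtain v A a where s: "s = (v, A, a)" by (cases s)
  have st: "A = P" "v \<in> V" "a \<in> Fv v P (a ` P)" "vchain V Fv (a ` P) L Q" using Cons(2) s by auto
  interpret fv: fsys p G "Sv v" "Fv v" by (rule fsv'[OF st(2)])
  note IH = Cons(1)[OF st(4)]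
  define b where "b = restrict (inv_into P a) (a ` P)"
  have inj: "inj_on a P" using fv.inj[OF st(3)] unfolding inj_homs_iff by blast
  have bb: "\<And>x. x \<in> P \<Longrightarrow> b (a x) = x" unfolding b_def using inj by (simp add: inv_into_f_f)
  have bim: "b ` (a ` P) = P"
  proof
    show "b ` a ` P \<subseteq> P" using bb by auto
    show "P \<subseteq> b ` a ` P"
    proof
      fix x assume "x \<in> P"
      then have "b (a x) = x" "a x \<in> a ` P" using bb by auto
      then show "x \<in> b ` a ` P" by (metis imageI)
    qed
  qed
  have b: "b \<in> Fv v (a ` P) (b ` (a ` P))" unfolding b_def by (rule fv.image[OF fv.inv[OF st(3)]])
  have im: "ccomp (invL L) ` Q = a ` P" by (rule vchain_image[OF conjunct1[OF IH]])
  have "vchain V Fv Q (invL L @ [(v, a ` P, b)]) P"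
    unfolding vchain_append im using IH b bim st(2) by simp
  moreover have "ccomp (invL L @ [(v, a ` P, b)]) (ccomp (s # L) x) = x" if x: "x \<in> P" for x
  proof -
    have "a x \<in> a ` P" using x by simp
    then have "ccomp (invL L) (ccomp L (a x)) = a x" using IH by blast
    then show ?thesis using s bb[OF x] by (simp add: ccomp_append)
  qed
  ultimately show ?case using s st(1) b_def by simp
qed simp

lemma vchain_restrL:
  "vchain V Fv P L Q \<Longrightarrow> is_sub G (Sv vs) Z \<Longrightarrow> Z \<subseteq> P \<Longrightarrow>
     vchain V Fv Z (restrL Z L) (ccomp L ` Z) \<and> (\<forall>x\<in>Z. ccomp (restrL Z L) x = ccomp L x)"
proof (induction L arbitrary: P Z)
  case (Cons s L)
  obtain v A a where s: "s = (v, A, a)" by (cases s)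
  have st: "A = P" "v \<in> V" "a \<in> Fv v P (a ` P)" "vchain V Fv (a ` P) L Q" using Cons(2) s by auto
  interpret fv: fsys p G "Sv v" "Fv v" by (rule fsv'[OF st(2)])
  have Pv: "P \<subseteq> Sv v" using fv.sub[OF st(3)] unfolding is_sub_def by blast
  have Zv: "is_sub G (Sv v) Z" using Cons(3,4) Pv unfolding is_sub_def by blast
  have r: "restrict a Z \<in> Fv v Z (a ` Z)" using fv.restr[OF st(3) Zv Cons(4)] by simp
  have rim: "restrict a Z ` Z = a ` Z" by auto
  have aZ: "is_sub G (Sv vs) (a ` Z)" using fv.image_sub[OF r] rim SvSub[OF st(2)] by metis
  have sub: "a ` Z \<subseteq> a ` P" using Cons(4) by auto
  note IH = Cons(1)[OF st(4) aZ sub]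
  show ?case using s st IH r rim by (auto simp: image_comp)
qed simp

lemma vchain_idL:
  "(\<And>u. u \<in> set us \<Longrightarrow> u \<in> V \<and> is_sub G (Sv u) Z) \<Longrightarrow> vchain V Fv Z (idL Z us) Z"
proof (induction us)
  case (Cons u us)
  have u: "u \<in> V" "is_sub G (Sv u) Z" using Cons(2) by auto
  interpret fv: fsys p G "Sv u" "Fv u" by (rule fsv'[OF u(1)])
  have "restrict (\<lambda>x. x) Z \<in> Fv u Z Z" by (rule fv.incl[OF u(2) u(2)]) simp
  moreover have "restrict (\<lambda>x. x) Z ` Z = Z" by auto
  ultimately show ?case using Cons u unfolding idL_def by simp
qed (simp add: idL_def)


lemma merge:
  "vchain V Fv P L Q \<Longrightarrow> successively (Rel Ed) (map fst L) \<Longrightarrow>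
    \<exists>L'. vchain V Fv P L' Q \<and> successively (\<lambda>a b. {a, b} \<in> Ed) (map fst L') \<and>
       (\<forall>x\<in>P. ccomp L' x = ccomp L x) \<and> (L \<noteq> [] \<longrightarrow> L' \<noteq> [] \<and> fst (hd L') = fst (hd L))"
proof (induction L arbitrary: P)
  case Nil
  then show ?case by (intro exI[of _ "[]"]) simp
next
  case (Cons s L0)
  obtain v A a where s: "s = (v, A, a)" by (cases s)
  have st: "A = P" "v \<in> V" "a \<in> Fv v P (a ` P)" "vchain V Fv (a ` P) L0 Q" using Cons(2) s by auto
  interpret fv: fsys p G "Sv v" "Fv v" by (rule fsv'[OF st(2)])
  have sc: "successively (Rel Ed) (map fst L0)" "L0 \<noteq> [] \<Longrightarrow> Rel Ed v (fst (hd L0))"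
    using Cons(3) s by (auto simp: successively_Cons hd_map)
  obtain L0' where L0': "vchain V Fv (a ` P) L0' Q" "successively (\<lambda>a b. {a, b} \<in> Ed) (map fst L0')"
    "\<forall>x\<in>a ` P. ccomp L0' x = ccomp L0 x" "L0 \<noteq> [] \<longrightarrow> L0' \<noteq> [] \<and> fst (hd L0') = fst (hd L0)"
    using Cons(1)[OF st(4) sc(1)] by blast
  show ?case
  proof (cases "L0 = []")
    case True
    then have "Q = a ` P" using st(4) by simp
    then show ?thesis using True s st by (intro exI[of _ "[(v, P, a)]"]) auto
  next
    case False
    then obtain w B b L1 where L1: "L0' = (w, B, b) # L1" "w = fst (hd L0)"
      using L0'(4) by (cases L0') auto
    have st1: "B = a ` P" "w \<in> V" "b \<in> Fv w (a ` P) (b ` a ` P)" "vchain V Fv (b ` a ` P) L1 Q"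
      using L0'(1) L1 by auto
    have sL1: "successively (\<lambda>a b. {a, b} \<in> Ed) (map fst L1)" "L1 \<noteq> [] \<Longrightarrow> {w, fst (hd L1)} \<in> Ed"
      using L0'(2) L1 by (auto simp: successively_Cons hd_map)
    have R: "Rel Ed v w" using sc(2)[OF False] L1 by simp
    show ?thesis
    proof (cases "v = w")
      case True
      define c where "c = restrict (b \<circ> a) P"
      have c0: "c \<in> Fv v P (b ` a ` P)" unfolding c_def using fv.comp[OF st(3)] st1(3) True by blast
      have cim: "c ` P = b ` a ` P" unfolding c_def by auto
      have c: "c \<in> Fv v P (c ` P)" using fv.image[OF c0] .
      have "vchain V Fv P ((v, P, c) # L1) Q" using c cim st(2) st1(4) by simp
      moreover have "successively (\<lambda>a b. {a, b} \<in> Ed) (map fst ((v, P, c) # L1))"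
        using sL1 True by (cases L1) (auto simp: successively_Cons)
      moreover have "\<forall>x\<in>P. ccomp ((v, P, c) # L1) x = ccomp (s # L0) x"
      proof
        fix x assume x: "x \<in> P"
        then have ax: "a x \<in> a ` P" by simp
        have "ccomp ((v, P, c) # L1) x = ccomp L1 (b (a x))" using x by (simp add: c_def)
        also have "\<dots> = ccomp L0' (a x)" using L1 by simp
        also have "\<dots> = ccomp L0 (a x)" using L0'(3) ax by blast
        finally show "ccomp ((v, P, c) # L1) x = ccomp (s # L0) x" using s by simp
      qed
      ultimately show ?thesis using s by (intro exI[of _ "(v, P, c) # L1"]) simp
    next
      case False
      then have e: "{v, w} \<in> Ed" using R unfolding Rel_def by blast
      have "vchain V Fv P ((v, P, a) # L0') Q" using st L0'(1) by simp
      moreover have "successively (\<lambda>a b. {a, b} \<in> Ed) (map fst ((v, P, a) # L0'))"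
        using L0'(2) e L1 by (auto simp: successively_Cons)
      moreover have "\<forall>x\<in>P. ccomp ((v, P, a) # L0') x = ccomp (s # L0) x"
        using L0'(3) s by simp
      ultimately show ?thesis using s by (intro exI[of _ "(v, P, a) # L0'"]) simp
    qed
  qed
qed

end

lemma chain_comp_shift0: "chain_comp (case_nat a as) (Suc n) x = chain_comp as n (a x)"
  by (induction n) auto

lemma chain_comp_shift: "chain_comp (case_nat a as) (Suc n) = chain_comp as n \<circ> a"
  using chain_comp_shift0 by (auto simp: fun_eq_iff simp del: chain_comp.simps)

context tfs begin

lemma to_fun:
  "vchain V Fv P L Q \<Longrightarrow> successively (\<lambda>a b. {a, b} \<in> Ed) (map fst L) \<Longrightarrow>
   \<exists>n Ps vv as. n = length L \<and> Ps 0 = P \<and> Ps n = Q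
     \<and> (\<forall>i<n. vv i \<in> V \<and> is_sub G (Sv (vv i)) (Ps i) \<and> is_sub G (Sv (vv i)) (Ps (Suc i))
              \<and> as i \<in> Fv (vv i) (Ps i) (Ps (Suc i)))
     \<and> (\<forall>i. Suc i < n \<longrightarrow> {vv i, vv (Suc i)} \<in> Ed)
     \<and> (\<forall>x. chain_comp as n x = ccomp L x) \<and> (L \<noteq> [] \<longrightarrow> vv 0 = fst (hd L))"
proof (induction L arbitrary: P)
  case Nil
  then show ?case by (intro exI[of _ 0] exI[of _ "\<lambda>_. P"]) simp
next
  case (Cons s L0)
  obtain v A a where s: "s = (v, A, a)" by (cases s)
  have st: "A = P" "v \<in> V" "a \<in> Fv v P (a ` P)" "vchain V Fv (a ` P) L0 Q" using Cons(2) s by auto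
  interpret fv: fsys p G "Sv v" "Fv v" by (rule fsv'[OF st(2)])
  have sc: "successively (\<lambda>a b. {a, b} \<in> Ed) (map fst L0)" "L0 \<noteq> [] \<Longrightarrow> {v, fst (hd L0)} \<in> Ed"
    using Cons(3) s by (auto simp: successively_Cons hd_map)
  obtain n Ps vv as where IH: "n = length L0" "Ps 0 = a ` P" "Ps n = Q"
     "\<forall>i<n. vv i \<in> V \<and> is_sub G (Sv (vv i)) (Ps i) \<and> is_sub G (Sv (vv i)) (Ps (Suc i))
              \<and> as i \<in> Fv (vv i) (Ps i) (Ps (Suc i))"
     "\<forall>i. Suc i < n \<longrightarrow> {vv i, vv (Suc i)} \<in> Ed"
     "\<forall>x. chain_comp as n x = ccomp L0 x" "L0 \<noteq> [] \<longrightarrow> vv 0 = fst (hd L0)"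
    using Cons(1)[OF st(4) sc(1)] by blast
  have sv: "is_sub G (Sv v) P" "is_sub G (Sv v) (a ` P)" using fv.sub[OF st(3)] by auto
  let ?Ps = "case_nat P Ps" and ?vv = "case_nat v vv" and ?as = "case_nat a as"
  have A: "\<forall>i<Suc n. ?vv i \<in> V \<and> is_sub G (Sv (?vv i)) (?Ps i) \<and> is_sub G (Sv (?vv i)) (?Ps (Suc i))
              \<and> ?as i \<in> Fv (?vv i) (?Ps i) (?Ps (Suc i))"
  proof (intro allI impI)
    fix i assume i: "i < Suc n"
    show "?vv i \<in> V \<and> is_sub G (Sv (?vv i)) (?Ps i) \<and> is_sub G (Sv (?vv i)) (?Ps (Suc i))
              \<and> ?as i \<in> Fv (?vv i) (?Ps i) (?Ps (Suc i))"
    proof (cases i)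
      case 0 then show ?thesis using st sv IH(2) by simp
    next
      case (Suc j) then show ?thesis using IH(4) i by simp
    qed
  qed
  have B: "\<forall>i. Suc i < Suc n \<longrightarrow> {?vv i, ?vv (Suc i)} \<in> Ed"
  proof (intro allI impI)
    fix i assume i: "Suc i < Suc n"
    show "{?vv i, ?vv (Suc i)} \<in> Ed"
    proof (cases i)
      case 0
      then have "L0 \<noteq> []" using i IH(1) by auto
      then show ?thesis using sc(2) IH(7) 0 by simp
    next
      case (Suc j) then show ?thesis using IH(5) i by simp
    qed
  qed
  have C: "\<forall>x. chain_comp ?as (Suc n) x = ccomp (s # L0) x"
    using IH(6) s by (simp only: chain_comp_shift0 ccomp.simps o_apply) simp
  show ?case
    by (intro exI[of _ "Suc n"] exI[of _ ?Ps] exI[of _ ?vv] exI[of _ ?as])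
      (use A B C IH(1,3) s in simp)
qed


abbreviation Cg where "Cg \<equiv> (\<lambda>P Q. \<Union>v\<in>V. if is_sub G (Sv v) P \<and> Q = Sv v then Fv v P Q else {})"
abbreviation FTT where "FTT \<equiv> generated_fs p G (Sv vs) Cg"

lemma fvs: "fsys p G (Sv vs) (Fv vs)" using fsv'[OF vsV] .

lemma Sv_sub: "v \<in> V \<Longrightarrow> is_sub G (Sv v) (Sv v)"
  using fsys.Ssub[OF fsv'] unfolding is_sub_def by blast

lemma FT_fs: "fusion_system p G (Sv vs) FTT"
proof (rule gen_fs[OF full_fs[OF grp fsys.Ssub[OF fvs] fsys.pg[OF fvs]]], intro allI subsetI)
  fix P Q \<alpha> assume "\<alpha> \<in> Cg P Q"
  then obtain v where v: "v \<in> V" "is_sub G (Sv v) P" "Q = Sv v" "\<alpha> \<in> Fv v P Q"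
    by (auto split: if_splits)
  have "is_sub G (Sv vs) P" "is_sub G (Sv vs) Q" using SvSub v Sv_sub by blast+
  moreover have "\<alpha> \<in> inj_homs G P Q" using fsys.inj[OF fsv'[OF v(1)] v(4)] .
  ultimately show "\<alpha> \<in> (if is_sub G (Sv vs) P \<and> is_sub G (Sv vs) Q then inj_homs G P Q else {})" by simp
qed

lemma ft: "fsys p G (Sv vs) FTT" using FT_fs by (simp add: fsys_def)

lemma Cg_FT: "v \<in> V \<Longrightarrow> is_sub G (Sv v) P \<Longrightarrow> \<alpha> \<in> Fv v P (Sv v) \<Longrightarrow> \<alpha> \<in> FTT P (Sv v)"
proof -
  assume v: "v \<in> V" and P: "is_sub G (Sv v) P" and a: "\<alpha> \<in> Fv v P (Sv v)"
  have "\<alpha> \<in> (if is_sub G (Sv v) P \<and> Sv v = Sv v then Fv v P (Sv v) else {})" using P a by simp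
  then have "\<alpha> \<in> Cg P (Sv v)" by (rule UN_I[OF v])
  then show "\<alpha> \<in> FTT P (Sv v)" using gen_contains[of Cg P "Sv v" p G "Sv vs"] by (rule subsetD[rotated])
qed

lemma Fv_FT:
  assumes v: "v \<in> V" and a: "\<alpha> \<in> Fv v P R" shows "\<alpha> \<in> FTT P R"
proof -
  interpret fv: fsys p G "Sv v" "Fv v" by (rule fsv'[OF v])
  interpret ft: fsys p G "Sv vs" FTT by (rule ft)
  have s: "is_sub G (Sv v) P" "is_sub G (Sv v) R" using fv.sub[OF a] by auto
  have "\<alpha> ` P \<subseteq> R" using fv.into[OF a] .
  moreover have "R \<subseteq> Sv v" using s unfolding is_sub_def by blast
  ultimately have "\<alpha> \<in> Fv v P (Sv v)" using fv.enlarge[OF a Sv_sub[OF v]] by blast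
  then have "\<alpha> \<in> FTT P (Sv v)" using Cg_FT[OF v s(1)] by blast
  then show ?thesis using ft.enlarge SvSub[OF v s(2)] fv.into[OF a] by blast
qed

lemma path_exists:
  assumes v: "v \<in> V"
  shows "\<exists>us. us \<noteq> [] \<and> hd us = v \<and> last us = vs \<and> successively (Rel Ed) us \<and> (\<forall>u\<in>set us. u \<in> V \<and> Sv v \<subseteq> Sv u)"
proof (rule tree_ind[OF _ _ v])
  show "\<exists>us. us \<noteq> [] \<and> hd us = vs \<and> last us = vs \<and> successively (Rel Ed) us \<and> (\<forall>u\<in>set us. u \<in> V \<and> Sv vs \<subseteq> Sv u)"
    using vsV by (intro exI[of _ "[vs]"]) simp
next
  fix v w assume st: "v \<in> V" "v \<noteq> vs" "w \<in> V" "{v, w} \<in> Ed" "Se {v, w} = Sv v" "Sv v \<subseteq> Sv w"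
    and "\<exists>us. us \<noteq> [] \<and> hd us = w \<and> last us = vs \<and> successively (Rel Ed) us \<and> (\<forall>u\<in>set us. u \<in> V \<and> Sv w \<subseteq> Sv u)"
  then obtain us where us: "us \<noteq> []" "hd us = w" "last us = vs" "successively (Rel Ed) us"
    "\<forall>u\<in>set us. u \<in> V \<and> Sv w \<subseteq> Sv u" by blast
  have "successively (Rel Ed) (v # us)" using us st(4) by (auto simp: successively_Cons Rel_def)
  moreover have "\<forall>u\<in>set (v # us). u \<in> V \<and> Sv v \<subseteq> Sv u" using us(5) st(1,6) by auto
  ultimately show "\<exists>us. us \<noteq> [] \<and> hd us = v \<and> last us = vs \<and> successively (Rel Ed) us \<and> (\<forall>u\<in>set us. u \<in> V \<and> Sv v \<subseteq> Sv u)"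
    using us by (intro exI[of _ "v # us"]) simp
qed

definition D where
  "D P Q = {\<alpha> \<in> FTT P Q. \<exists>L. vchain V Fv P L (\<alpha> ` P) \<and> good_vs Ed vs (map fst L) \<and> (\<forall>x\<in>P. \<alpha> x = ccomp L x)}"

lemma img_cong: "(\<forall>x\<in>P. f x = g x) \<Longrightarrow> f ` P = g ` P" by auto

lemma D_fs: "fusion_system p G (Sv vs) D"
proof -
  interpret ft: fsys p G "Sv vs" FTT by (rule ft)
  interpret fvs: fsys p G "Sv vs" "Fv vs" by (rule fvs)
  have DFT: "D P Q \<subseteq> FTT P Q" for P Q unfolding D_def by blast
  have A2: "\<forall>P Q. \<not> (is_sub G (Sv vs) P \<and> is_sub G (Sv vs) Q) \<longrightarrow> D P Q = {}"
    using DFT ft.sub by blast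
  have A3: "\<forall>P Q. is_sub G (Sv vs) P \<and> is_sub G (Sv vs) Q \<longrightarrow> conj_homs G (Sv vs) P Q \<subseteq> D P Q \<and> D P Q \<subseteq> inj_homs G P Q"
  proof (intro allI impI conjI)
    fix P Q assume PQ: "is_sub G (Sv vs) P \<and> is_sub G (Sv vs) Q"
    show "D P Q \<subseteq> inj_homs G P Q" using DFT ft.inj by blast
    show "conj_homs G (Sv vs) P Q \<subseteq> D P Q"
    proof
      fix c assume c: "c \<in> conj_homs G (Sv vs) P Q"
      have cF: "c \<in> FTT P Q" using ft.conj PQ c by blast
      have cv: "c \<in> Fv vs P (c ` P)" using fvs.image fvs.conj PQ c by blast
      have "vchain V Fv P [(vs, P, c)] (c ` P)" using cv vsV by simp
      moreover have "good_vs Ed vs (map fst [(vs, P, c)])" by (simp add: good_vs_def)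
      ultimately show "c \<in> D P Q" unfolding D_def using cF by fastforce
    qed
  qed
  have A4: "\<forall>P Q R \<phi> \<psi>. \<phi> \<in> D P Q \<longrightarrow> \<psi> \<in> D Q R \<longrightarrow> restrict (\<psi> \<circ> \<phi>) P \<in> D P R"
  proof (intro allI impI)
    fix P Q R \<phi> \<psi> assume a: "\<phi> \<in> D P Q" "\<psi> \<in> D Q R"
    obtain L1 where L1: "\<phi> \<in> FTT P Q" "vchain V Fv P L1 (\<phi> ` P)" "good_vs Ed vs (map fst L1)"
      "\<forall>x\<in>P. \<phi> x = ccomp L1 x" using a(1) unfolding D_def by blast
    obtain L2 where L2: "\<psi> \<in> FTT Q R" "vchain V Fv Q L2 (\<psi> ` Q)" "good_vs Ed vs (map fst L2)"
      "\<forall>x\<in>Q. \<psi> x = ccomp L2 x" using a(2) unfolding D_def by blast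
    have im1: "\<phi> ` P \<subseteq> Q" using ft.into[OF L1(1)] .
    have is1: "is_sub G (Sv vs) (\<phi> ` P)" using ft.image_sub[OF L1(1)] .
    note r = vchain_restrL[OF L2(2) is1 im1]
    have c1: "ccomp L1 ` P = \<phi> ` P" using vchain_image[OF L1(2)] .
    have e2: "ccomp L2 ` (\<phi> ` P) = \<psi> ` (\<phi> ` P)" using L2(4) im1 by (intro img_cong) auto
    define L where "L = L1 @ restrL (\<phi> ` P) L2"
    have "vchain V Fv P L (restrict (\<psi> \<circ> \<phi>) P ` P)"
      unfolding L_def vchain_append c1 using L1(2) r e2 by (simp add: image_comp)
    moreover have "good_vs Ed vs (map fst L)"
      unfolding L_def using good_append L1(3) L2(3) by (simp add: map_fst_restrL)
    moreover have "\<forall>x\<in>P. restrict (\<psi> \<circ> \<phi>) P x = ccomp L x"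
    proof
      fix x assume x: "x \<in> P"
      have px: "\<phi> x \<in> \<phi> ` P" using x by simp
      have "ccomp L x = ccomp (restrL (\<phi> ` P) L2) (\<phi> x)" unfolding L_def using L1(4) x by (simp add: ccomp_append)
      also have "\<dots> = ccomp L2 (\<phi> x)" using r px by blast
      also have "\<dots> = \<psi> (\<phi> x)" using L2(4) im1 px by auto
      finally show "restrict (\<psi> \<circ> \<phi>) P x = ccomp L x" using x by simp
    qed
    moreover have "restrict (\<psi> \<circ> \<phi>) P \<in> FTT P R" using ft.comp[OF L1(1) L2(1)] .
    ultimately show "restrict (\<psi> \<circ> \<phi>) P \<in> D P R" unfolding D_def by blast
  qed
  have A5: "\<forall>P Q \<phi>. \<phi> \<in> D P Q \<longrightarrow> \<phi> \<in> D P (\<phi> ` P) \<and> restrict (inv_into P \<phi>) (\<phi> ` P) \<in> D (\<phi> ` P) P"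
  proof (intro allI impI conjI)
    fix P Q \<phi> assume a: "\<phi> \<in> D P Q"
    obtain L1 where L1: "\<phi> \<in> FTT P Q" "vchain V Fv P L1 (\<phi> ` P)" "good_vs Ed vs (map fst L1)"
      "\<forall>x\<in>P. \<phi> x = ccomp L1 x" using a(1) unfolding D_def by blast
    show "\<phi> \<in> D P (\<phi> ` P)" using ft.image[OF L1(1)] L1 unfolding D_def by blast
    define b where "b = restrict (inv_into P \<phi>) (\<phi> ` P)"
    have inj: "inj_on \<phi> P" using ft.inj[OF L1(1)] unfolding inj_homs_iff by blast
    have bb: "\<And>x. x \<in> P \<Longrightarrow> b (\<phi> x) = x" unfolding b_def using inj by (simp add: inv_into_f_f)
    have bim: "b ` (\<phi> ` P) = P"
    proof
      show "b ` \<phi> ` P \<subseteq> P" using bb by auto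
      show "P \<subseteq> b ` \<phi> ` P"
      proof
        fix x assume "x \<in> P"
        then have "b (\<phi> x) = x" "\<phi> x \<in> \<phi> ` P" using bb by auto
        then show "x \<in> b ` \<phi> ` P" by (metis imageI)
      qed
    qed
    note iv = vchain_invL[OF L1(2)]
    have "b \<in> FTT (\<phi> ` P) P" unfolding b_def by (rule ft.inv[OF L1(1)])
    moreover have "vchain V Fv (\<phi> ` P) (invL L1) (b ` (\<phi> ` P))" unfolding bim using iv by blast
    moreover have "good_vs Ed vs (map fst (invL L1))" using L1(3) by (simp add: map_fst_invL good_rev)
    moreover have "\<forall>y\<in>\<phi> ` P. b y = ccomp (invL L1) y"
    proof
      fix y assume "y \<in> \<phi> ` P"
      then obtain x where x: "y = \<phi> x" "x \<in> P" by (rule imageE)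
      have "ccomp (invL L1) (ccomp L1 x) = x" using iv x(2) by blast
      then show "b y = ccomp (invL L1) y" using x bb L1(4) by simp
    qed
    ultimately show "restrict (inv_into P \<phi>) (\<phi> ` P) \<in> D (\<phi> ` P) P" unfolding D_def b_def[symmetric] by blast
  qed
  show ?thesis unfolding fusion_system_def
    by (intro conjI) (fact grp ft.Ssub ft.pg A2 A3 A4 A5)+
qed


lemma Cg_D: "\<alpha> \<in> Cg P Q \<Longrightarrow> \<alpha> \<in> D P Q"
proof -
  assume "\<alpha> \<in> Cg P Q"
  then obtain v where v: "v \<in> V" "is_sub G (Sv v) P" "Q = Sv v" "\<alpha> \<in> Fv v P Q"
    by (auto split: if_splits)
  interpret fv: fsys p G "Sv v" "Fv v" by (rule fsv'[OF v(1)])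
  have aF: "\<alpha> \<in> FTT P Q" using Cg_FT v by blast
  have aI: "\<alpha> \<in> Fv v P (\<alpha> ` P)" using fv.image[OF v(4)] .
  have isa: "is_sub G (Sv v) (\<alpha> ` P)" using fv.image_sub[OF v(4)] .
  obtain us where us: "us \<noteq> []" "hd us = v" "last us = vs" "successively (Rel Ed) us"
    "\<forall>u\<in>set us. u \<in> V \<and> Sv v \<subseteq> Sv u" using path_exists[OF v(1)] by blast
  obtain t where t: "us = v # t" using us(1,2) by (cases us) auto
  have tu: "\<And>u. u \<in> set t \<Longrightarrow> u \<in> V \<and> Sv v \<subseteq> Sv u" using us(5) t by auto
  have c1: "vchain V Fv P (idL P (rev t)) P"
    by (rule vchain_idL) (use tu v(2) in \<open>auto simp: is_sub_def\<close>)
  have c3: "vchain V Fv (\<alpha> ` P) (idL (\<alpha> ` P) t) (\<alpha> ` P)"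
    by (rule vchain_idL) (use tu isa in \<open>auto simp: is_sub_def\<close>)
  define L where "L = idL P (rev t) @ [(v, P, \<alpha>)] @ idL (\<alpha> ` P) t"
  have i1: "ccomp (idL P (rev t)) ` P = P" using vchain_image[OF c1] .
  have "vchain V Fv P L (\<alpha> ` P)"
    unfolding L_def vchain_append i1 using c1 c3 aI v(1) by simp
  moreover have "\<forall>x\<in>P. \<alpha> x = ccomp L x"
    unfolding L_def by (auto simp: ccomp_append ccomp_idL)
  moreover have "good_vs Ed vs (map fst L)"
  proof -
    have m: "map fst L = rev us @ t" unfolding L_def t by (simp add: map_fst_idL)
    have s1: "successively (Rel Ed) (rev us)" unfolding successively_rev Rel_sym by (rule us(4))
    have s2: "successively (Rel Ed) t" "t \<noteq> [] \<Longrightarrow> Rel Ed v (hd t)"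
      using us(4) t by (auto simp: successively_Cons)
    have lr: "last (rev us) = v" using us(1,2) by (simp add: last_rev)
    have "successively (Rel Ed) (rev us @ t)"
      unfolding successively_append_iff using s1 s2 lr by auto
    moreover have "hd (rev us @ t) = vs" using us(3) t by (cases "t = []") (auto simp: hd_append hd_rev)
    moreover have "last (rev us @ t) = vs" using us(3) t by (cases "t = []") (auto simp: last_rev)
    ultimately show ?thesis unfolding m good_vs_def by simp
  qed
  ultimately show "\<alpha> \<in> D P Q" unfolding D_def using aF by blast
qed

lemma FT_D: "FTT P Q \<subseteq> D P Q"
  by (rule gen_least[OF D_fs]) (use Cg_D in blast)

lemma decomp:
  assumes "\<alpha> \<in> FTT P R"
  shows "\<exists>n Ps vv as.
             Ps 0 = P \<and> Ps n = \<alpha> ` P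
             \<and> (\<forall>i<n. vv i \<in> V \<and> is_sub G (Sv (vv i)) (Ps i) \<and> is_sub G (Sv (vv i)) (Ps (Suc i))
                      \<and> as i \<in> Fv (vv i) (Ps i) (Ps (Suc i)))
             \<and> (\<forall>i. Suc i < n \<longrightarrow> {vv i, vv (Suc i)} \<in> Ed)
             \<and> (\<forall>x\<in>P. \<alpha> x = chain_comp as n x)"
proof -
  obtain L where L: "vchain V Fv P L (\<alpha> ` P)" "good_vs Ed vs (map fst L)" "\<forall>x\<in>P. \<alpha> x = ccomp L x"
    using FT_D assms unfolding D_def by blast
  obtain L' where L': "vchain V Fv P L' (\<alpha> ` P)" "successively (\<lambda>a b. {a, b} \<in> Ed) (map fst L')"
    "\<forall>x\<in>P. ccomp L' x = ccomp L x"
    using merge[OF L(1)] L(2) unfolding good_vs_def by blast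
  obtain n Ps vv as where F: "Ps 0 = P" "Ps n = \<alpha> ` P"
     "\<forall>i<n. vv i \<in> V \<and> is_sub G (Sv (vv i)) (Ps i) \<and> is_sub G (Sv (vv i)) (Ps (Suc i))
              \<and> as i \<in> Fv (vv i) (Ps i) (Ps (Suc i))"
     "\<forall>i. Suc i < n \<longrightarrow> {vv i, vv (Suc i)} \<in> Ed"
     "\<forall>x. chain_comp as n x = ccomp L' x"
    using to_fun[OF L'(1,2)] by blast
  have "\<forall>x\<in>P. \<alpha> x = chain_comp as n x" using F(5) L'(3) L(3) by simp
  then show ?thesis using F(1-4) by blast
qed


lemma id_hom: "A \<subseteq> B \<Longrightarrow> (\<lambda>x. x) \<in> hom (G\<lparr>carrier := A\<rparr>) (G\<lparr>carrier := B\<rparr>)"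
  unfolding hom_def by auto

lemma cocone_v: "v \<in> V \<Longrightarrow> fs_morphism G (Sv v) (Fv v) G (Sv vs) FTT (\<lambda>x. x)"
  unfolding fs_morphism_def using id_hom SvS Fv_FT by auto

lemma cocone_e:
  assumes e: "e \<in> Ed" shows "fs_morphism G (Se e) (Fe e) G (Sv vs) FTT (\<lambda>x. x)"
proof -
  obtain v where v: "v \<in> e" using edge_ne[OF e] by blast
  have vV: "v \<in> V" using edgeV[OF e] v by blast
  have ed: "Se e \<subseteq> Sv v" "fs_morphism G (Se e) (Fe e) G (Sv v) (Fv v) (\<lambda>x. x)"
    using edge[OF e v] unfolding inj_fs_morphism_def by auto
  have "Se e \<subseteq> Sv vs" using ed(1) SvS[OF vV] by blast
  moreover have "\<exists>\<beta>\<in>FTT P R. \<forall>x\<in>P. \<alpha> x = \<beta> x"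
    if pr: "is_sub G (Se e) P" "is_sub G (Se e) R" "\<alpha> \<in> Fe e P R" for P R \<alpha>
  proof -
    have ex: "\<exists>\<beta>\<in>Fv v P R. \<forall>x\<in>P. \<alpha> x = \<beta> x"
      using ed(2) pr unfolding fs_morphism_def image_ident by blast
    then obtain \<beta> where "\<beta> \<in> Fv v P R" "\<forall>x\<in>P. \<alpha> x = \<beta> x" by blast
    then show ?thesis using Fv_FT[OF vV] by blast
  qed
  ultimately show ?thesis unfolding fs_morphism_def using id_hom by auto
qed

lemma universal:
  fixes H :: "('b, 'n) monoid_scheme" and T E and \<psi>v :: "'v \<Rightarrow> 'a \<Rightarrow> 'b" and \<psi>e :: "'v set \<Rightarrow> 'a \<Rightarrow> 'b"
  assumes E: "fusion_system p H T E"
    and mv: "\<forall>v\<in>V. fs_morphism G (Sv v) (Fv v) H T E (\<psi>v v)"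
    and me: "\<forall>e\<in>Ed. fs_morphism G (Se e) (Fe e) H T E (\<psi>e e)"
    and cmp: "\<forall>e\<in>Ed. \<forall>v\<in>e. \<forall>x\<in>Se e. \<psi>e e x = \<psi>v v x"
  shows "fs_morphism G (Sv vs) FTT H T E (\<psi>v vs)
               \<and> (\<forall>v\<in>V. \<forall>x\<in>Sv v. \<psi>v vs x = \<psi>v v x)
               \<and> (\<forall>e\<in>Ed. \<forall>x\<in>Se e. \<psi>v vs x = \<psi>e e x)"
proof -
  interpret ft: fsys p G "Sv vs" FTT by (rule ft)
  interpret fe: fsys p H T E using E by (simp add: fsys_def)
  have agree: "\<forall>x\<in>Sv v. \<psi>v v x = \<psi>v vs x" if v: "v \<in> V" for v
  proof (rule tree_ind[OF _ _ v])
    show "\<forall>x\<in>Sv vs. \<psi>v vs x = \<psi>v vs x" by simp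
  next
    fix v w assume st: "v \<in> V" "v \<noteq> vs" "w \<in> V" "{v, w} \<in> Ed" "Se {v, w} = Sv v" "Sv v \<subseteq> Sv w"
      and IH: "\<forall>x\<in>Sv w. \<psi>v w x = \<psi>v vs x"
    show "\<forall>x\<in>Sv v. \<psi>v v x = \<psi>v vs x"
    proof
      fix x assume x: "x \<in> Sv v"
      have "\<psi>v v x = \<psi>e {v, w} x" using cmp st(4,5) x by auto
      also have "\<dots> = \<psi>v w x" using cmp st(4,5) x by auto
      also have "\<dots> = \<psi>v vs x" using IH st(6) x by auto
      finally show "\<psi>v v x = \<psi>v vs x" .
    qed
  qed
  let ?\<psi> = "\<psi>v vs"
  define E' where "E' P Q = {\<alpha> \<in> FTT P Q. \<exists>\<beta>\<in>E (?\<psi> ` P) (?\<psi> ` Q). \<forall>x\<in>P. ?\<psi> (\<alpha> x) = \<beta> (?\<psi> x)}" for P Q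
  have mvs: "fs_morphism G (Sv vs) (Fv vs) H T E ?\<psi>" using mv vsV by blast
  have E'FTT: "E' P Q \<subseteq> FTT P Q" for P Q unfolding E'_def by blast
  have E'fs: "fusion_system p G (Sv vs) E'"
  proof -
    have A2: "\<forall>P Q. \<not> (is_sub G (Sv vs) P \<and> is_sub G (Sv vs) Q) \<longrightarrow> E' P Q = {}"
      using E'FTT ft.sub by blast
    have A3: "\<forall>P Q. is_sub G (Sv vs) P \<and> is_sub G (Sv vs) Q \<longrightarrow> conj_homs G (Sv vs) P Q \<subseteq> E' P Q \<and> E' P Q \<subseteq> inj_homs G P Q"
    proof (intro allI impI conjI)
      fix P Q assume PQ: "is_sub G (Sv vs) P \<and> is_sub G (Sv vs) Q"
      show "E' P Q \<subseteq> inj_homs G P Q" using E'FTT ft.inj by blast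
      show "conj_homs G (Sv vs) P Q \<subseteq> E' P Q"
      proof
        fix c assume c: "c \<in> conj_homs G (Sv vs) P Q"
        have "c \<in> FTT P Q" using ft.conj PQ c by blast
        moreover have "c \<in> Fv vs P Q" using fsys.conj[OF fvs] PQ c by blast
        then have "\<exists>\<beta>\<in>E (?\<psi> ` P) (?\<psi> ` Q). \<forall>x\<in>P. ?\<psi> (c x) = \<beta> (?\<psi> x)"
          using mvs PQ unfolding fs_morphism_def by blast
        ultimately show "c \<in> E' P Q" unfolding E'_def by blast
      qed
    qed
    have A4: "\<forall>P Q R \<phi> \<chi>. \<phi> \<in> E' P Q \<longrightarrow> \<chi> \<in> E' Q R \<longrightarrow> restrict (\<chi> \<circ> \<phi>) P \<in> E' P R"
    proof (intro allI impI)
      fix P Q R \<phi> \<chi> assume a: "\<phi> \<in> E' P Q" "\<chi> \<in> E' Q R"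
      obtain \<beta>1 where b1: "\<phi> \<in> FTT P Q" "\<beta>1 \<in> E (?\<psi> ` P) (?\<psi> ` Q)" "\<forall>x\<in>P. ?\<psi> (\<phi> x) = \<beta>1 (?\<psi> x)"
        using a(1) unfolding E'_def by blast
      obtain \<beta>2 where b2: "\<chi> \<in> FTT Q R" "\<beta>2 \<in> E (?\<psi> ` Q) (?\<psi> ` R)" "\<forall>x\<in>Q. ?\<psi> (\<chi> x) = \<beta>2 (?\<psi> x)"
        using a(2) unfolding E'_def by blast
      have c: "restrict (\<beta>2 \<circ> \<beta>1) (?\<psi> ` P) \<in> E (?\<psi> ` P) (?\<psi> ` R)" by (rule fe.comp[OF b1(2) b2(2)])
      have into: "\<phi> ` P \<subseteq> Q" using ft.into[OF b1(1)] .
      have "\<forall>x\<in>P. ?\<psi> (restrict (\<chi> \<circ> \<phi>) P x) = restrict (\<beta>2 \<circ> \<beta>1) (?\<psi> ` P) (?\<psi> x)"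
      proof
        fix x assume x: "x \<in> P"
        have "\<phi> x \<in> Q" using into x by blast
        then show "?\<psi> (restrict (\<chi> \<circ> \<phi>) P x) = restrict (\<beta>2 \<circ> \<beta>1) (?\<psi> ` P) (?\<psi> x)"
          using x b1(3) b2(3) by simp
      qed
      then show "restrict (\<chi> \<circ> \<phi>) P \<in> E' P R" unfolding E'_def using ft.comp[OF b1(1) b2(1)] c by blast
    qed
    have A5: "\<forall>P Q \<phi>. \<phi> \<in> E' P Q \<longrightarrow> \<phi> \<in> E' P (\<phi> ` P) \<and> restrict (inv_into P \<phi>) (\<phi> ` P) \<in> E' (\<phi> ` P) P"
    proof (intro allI impI conjI)
      fix P Q \<phi> assume a: "\<phi> \<in> E' P Q"
      obtain \<beta> where b: "\<phi> \<in> FTT P Q" "\<beta> \<in> E (?\<psi> ` P) (?\<psi> ` Q)" "\<forall>x\<in>P. ?\<psi> (\<phi> x) = \<beta> (?\<psi> x)"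
        using a unfolding E'_def by blast
      have bim: "\<beta> ` (?\<psi> ` P) = ?\<psi> ` (\<phi> ` P)" using b(3) by (auto simp: image_iff)
      have b': "\<beta> \<in> E (?\<psi> ` P) (?\<psi> ` (\<phi> ` P))" using fe.image[OF b(2)] unfolding bim .
      show "\<phi> \<in> E' P (\<phi> ` P)" unfolding E'_def using ft.image[OF b(1)] b' b(3) by blast
      define \<gamma> where "\<gamma> = restrict (inv_into (?\<psi> ` P) \<beta>) (\<beta> ` (?\<psi> ` P))"
      have g: "\<gamma> \<in> E (?\<psi> ` (\<phi> ` P)) (?\<psi> ` P)" unfolding \<gamma>_def using fe.inv[OF b(2)] unfolding bim .
      have injp: "inj_on \<phi> P" using ft.inj[OF b(1)] unfolding inj_homs_iff by blast
      have injb: "inj_on \<beta> (?\<psi> ` P)" using fe.inj[OF b(2)] unfolding inj_homs_iff by blast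
      have "\<forall>y\<in>\<phi> ` P. ?\<psi> (restrict (inv_into P \<phi>) (\<phi> ` P) y) = \<gamma> (?\<psi> y)"
      proof
        fix y assume "y \<in> \<phi> ` P"
        then obtain x where x: "y = \<phi> x" "x \<in> P" by (rule imageE)
        have l: "restrict (inv_into P \<phi>) (\<phi> ` P) y = x" using x injp by (simp add: inv_into_f_f)
        have "?\<psi> y = \<beta> (?\<psi> x)" using x b(3) by simp
        moreover have "?\<psi> x \<in> ?\<psi> ` P" using x by simp
        ultimately have "\<gamma> (?\<psi> y) = ?\<psi> x" unfolding \<gamma>_def using injb by (simp add: inv_into_f_f)
        then show "?\<psi> (restrict (inv_into P \<phi>) (\<phi> ` P) y) = \<gamma> (?\<psi> y)" using l by simp
      qed
      then show "restrict (inv_into P \<phi>) (\<phi> ` P) \<in> E' (\<phi> ` P) P"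
        unfolding E'_def using ft.inv[OF b(1)] g by blast
    qed
    show ?thesis unfolding fusion_system_def
      by (intro conjI) (fact grp ft.Ssub ft.pg A2 A3 A4 A5)+
  qed
  have CgE': "\<forall>P Q. Cg P Q \<subseteq> E' P Q"
  proof (intro allI subsetI)
    fix P Q \<alpha> assume "\<alpha> \<in> Cg P Q"
    then obtain v where v: "v \<in> V" "is_sub G (Sv v) P" "Q = Sv v" "\<alpha> \<in> Fv v P Q"
      by (auto split: if_splits)
    have aF: "\<alpha> \<in> FTT P Q" using Cg_FT v by blast
    obtain \<beta> where b: "\<beta> \<in> E (\<psi>v v ` P) (\<psi>v v ` Q)" "\<forall>x\<in>P. \<psi>v v (\<alpha> x) = \<beta> (\<psi>v v x)"
      using mv v Sv_sub[OF v(1)] unfolding fs_morphism_def by blast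
    have ag: "\<forall>x\<in>Sv v. \<psi>v v x = ?\<psi> x" using agree[OF v(1)] .
    have Pv: "P \<subseteq> Sv v" using v(2) unfolding is_sub_def by blast
    have i1: "\<psi>v v ` P = ?\<psi> ` P" using ag Pv by (intro img_cong) auto
    have i2: "\<psi>v v ` Q = ?\<psi> ` Q" using ag v(3) by (intro img_cong) auto
    have into: "\<alpha> ` P \<subseteq> Sv v" using fsys.into[OF fsv'[OF v(1)] v(4)] v(3) by simp
    have "\<forall>x\<in>P. ?\<psi> (\<alpha> x) = \<beta> (?\<psi> x)"
    proof
      fix x assume x: "x \<in> P"
      have ax: "\<alpha> x \<in> Sv v" using into x by blast
      have xv: "x \<in> Sv v" using x Pv by blast
      have "?\<psi> (\<alpha> x) = \<psi>v v (\<alpha> x)" using ag ax by simp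
      also have "\<dots> = \<beta> (\<psi>v v x)" using b(2) x by simp
      also have "\<dots> = \<beta> (?\<psi> x)" using ag xv by simp
      finally show "?\<psi> (\<alpha> x) = \<beta> (?\<psi> x)" .
    qed
    then show "\<alpha> \<in> E' P Q" unfolding E'_def using aF b(1) i1 i2 by auto
  qed
  have FTE': "FTT P Q \<subseteq> E' P Q" for P Q by (rule gen_least[OF E'fs CgE'])
  have "fs_morphism G (Sv vs) FTT H T E ?\<psi>"
    unfolding fs_morphism_def
  proof (intro conjI allI impI)
    show "?\<psi> \<in> hom (G\<lparr>carrier := Sv vs\<rparr>) (H\<lparr>carrier := T\<rparr>)" using mvs unfolding fs_morphism_def by blast
    fix P R \<alpha> assume "is_sub G (Sv vs) P \<and> is_sub G (Sv vs) R \<and> \<alpha> \<in> FTT P R"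
    then have "\<alpha> \<in> E' P R" using FTE' by blast
    then show "\<exists>\<beta>\<in>E (?\<psi> ` P) (?\<psi> ` R). \<forall>x\<in>P. ?\<psi> (\<alpha> x) = \<beta> (?\<psi> x)" unfolding E'_def by blast
  qed
  moreover have "\<forall>v\<in>V. \<forall>x\<in>Sv v. ?\<psi> x = \<psi>v v x" using agree by simp
  moreover have "\<forall>e\<in>Ed. \<forall>x\<in>Se e. ?\<psi> x = \<psi>e e x"
  proof (intro ballI)
    fix e x assume e: "e \<in> Ed" and x: "x \<in> Se e"
    obtain v where v: "v \<in> e" using edge_ne[OF e] by blast
    have vV: "v \<in> V" using edgeV[OF e] v by blast
    have "x \<in> Sv v" using edge[OF e v] x by blast
    then show "?\<psi> x = \<psi>e e x" using agree[OF vV] cmp e v x by auto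
  qed
  ultimately show ?thesis by blast
qed

end


theorem lemma2p3:
  fixes p :: nat and G :: "('a, 'm) monoid_scheme"
    and V :: "'v set" and Ed :: "'v set set" and vs :: 'v
    and Sv :: "'v \<Rightarrow> 'a set" and Se :: "'v set \<Rightarrow> 'a set"
    and Fv :: "'v \<Rightarrow> 'a set \<Rightarrow> 'a set \<Rightarrow> ('a \<Rightarrow> 'a) set"
    and Fe :: "'v set \<Rightarrow> 'a set \<Rightarrow> 'a set \<Rightarrow> ('a \<Rightarrow> 'a) set"
  assumes tree: "tree_fs_H p G V Ed vs Sv Se Fv Fe"
  defines "S \<equiv> Sv vs"
  defines "FT \<equiv> generated_fs p G S
             (\<lambda>P Q. \<Union>v\<in>V. if is_sub G (Sv v) P \<and> Q = Sv v then Fv v P Q else {})"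
  shows
    \<comment> \<open>F_T with the inclusions is a cocone over F\<close>
    "fusion_system p G S FT
     \<and> (\<forall>v\<in>V. fs_morphism G (Sv v) (Fv v) G S FT (\<lambda>x. x))
     \<and> (\<forall>e\<in>Ed. fs_morphism G (Se e) (Fe e) G S FT (\<lambda>x. x))
     \<comment> \<open>universal property, for every cocone into a fusion system E on T\<close>
     \<and> (\<forall>(H :: ('b, 'n) monoid_scheme) T E (\<psi>v :: 'v \<Rightarrow> 'a \<Rightarrow> 'b) (\<psi>e :: 'v set \<Rightarrow> 'a \<Rightarrow> 'b).
          fusion_system p H T E
          \<and> (\<forall>v\<in>V. fs_morphism G (Sv v) (Fv v) H T E (\<psi>v v))
          \<and> (\<forall>e\<in>Ed. fs_morphism G (Se e) (Fe e) H T E (\<psi>e e))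
          \<and> (\<forall>e\<in>Ed. \<forall>v\<in>e. \<forall>x\<in>Se e. \<psi>e e x = \<psi>v v x)
          \<longrightarrow>
          (\<exists>\<psi>. fs_morphism G S FT H T E \<psi>
               \<and> (\<forall>v\<in>V. \<forall>x\<in>Sv v. \<psi> x = \<psi>v v x)
               \<and> (\<forall>e\<in>Ed. \<forall>x\<in>Se e. \<psi> x = \<psi>e e x))
          \<and> (\<forall>\<psi> \<psi>'. fs_morphism G S FT H T E \<psi>
               \<and> (\<forall>v\<in>V. \<forall>x\<in>Sv v. \<psi> x = \<psi>v v x)
               \<and> (\<forall>e\<in>Ed. \<forall>x\<in>Se e. \<psi> x = \<psi>e e x)
               \<and> fs_morphism G S FT H T E \<psi>'
               \<and> (\<forall>v\<in>V. \<forall>x\<in>Sv v. \<psi>' x = \<psi>v v x)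
               \<and> (\<forall>e\<in>Ed. \<forall>x\<in>Se e. \<psi>' x = \<psi>e e x)
               \<longrightarrow> (\<forall>x\<in>S. \<psi> x = \<psi>' x)))
     \<comment> \<open>decomposition of morphisms of F_T along paths in the tree\<close>
     \<and> (\<forall>P \<alpha>. is_sub G S P \<and> \<alpha> \<in> FT P S \<longrightarrow>
          (\<exists>n Ps vv as.
             Ps 0 = P \<and> Ps n = \<alpha> ` P
             \<and> (\<forall>i<n. vv i \<in> V \<and> is_sub G (Sv (vv i)) (Ps i) \<and> is_sub G (Sv (vv i)) (Ps (Suc i))
                      \<and> as i \<in> Fv (vv i) (Ps i) (Ps (Suc i)))
             \<and> (\<forall>i. Suc i < n \<longrightarrow> {vv i, vv (Suc i)} \<in> Ed)
             \<and> (\<forall>x\<in>P. \<alpha> x = chain_comp as n x)))"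
  proof -
  interpret tfs p G V Ed vs Sv Se Fv Fe by unfold_locales (rule tree)
  show ?thesis unfolding S_def FT_def
  proof (intro conjI)
    show "fusion_system p G (Sv vs) FTT" by (rule FT_fs)
    show "\<forall>v\<in>V. fs_morphism G (Sv v) (Fv v) G (Sv vs) FTT (\<lambda>x. x)" using cocone_v by blast
    show "\<forall>e\<in>Ed. fs_morphism G (Se e) (Fe e) G (Sv vs) FTT (\<lambda>x. x)" using cocone_e by blast
    show "\<forall>P \<alpha>. is_sub G (Sv vs) P \<and> \<alpha> \<in> FTT P (Sv vs) \<longrightarrow>
          (\<exists>n Ps vv as.
             Ps 0 = P \<and> Ps n = \<alpha> ` P
             \<and> (\<forall>i<n. vv i \<in> V \<and> is_sub G (Sv (vv i)) (Ps i) \<and> is_sub G (Sv (vv i)) (Ps (Suc i))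
                      \<and> as i \<in> Fv (vv i) (Ps i) (Ps (Suc i)))
             \<and> (\<forall>i. Suc i < n \<longrightarrow> {vv i, vv (Suc i)} \<in> Ed)
             \<and> (\<forall>x\<in>P. \<alpha> x = chain_comp as n x))"
      using decomp by blast
    show "\<forall>(H :: ('b, 'n) monoid_scheme) T E (\<psi>v :: 'v \<Rightarrow> 'a \<Rightarrow> 'b) (\<psi>e :: 'v set \<Rightarrow> 'a \<Rightarrow> 'b).
          fusion_system p H T E
          \<and> (\<forall>v\<in>V. fs_morphism G (Sv v) (Fv v) H T E (\<psi>v v))
          \<and> (\<forall>e\<in>Ed. fs_morphism G (Se e) (Fe e) H T E (\<psi>e e))
          \<and> (\<forall>e\<in>Ed. \<forall>v\<in>e. \<forall>x\<in>Se e. \<psi>e e x = \<psi>v v x)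
          \<longrightarrow>
          (\<exists>\<psi>. fs_morphism G (Sv vs) FTT H T E \<psi>
               \<and> (\<forall>v\<in>V. \<forall>x\<in>Sv v. \<psi> x = \<psi>v v x)
               \<and> (\<forall>e\<in>Ed. \<forall>x\<in>Se e. \<psi> x = \<psi>e e x))
          \<and> (\<forall>\<psi> \<psi>'. fs_morphism G (Sv vs) FTT H T E \<psi>
               \<and> (\<forall>v\<in>V. \<forall>x\<in>Sv v. \<psi> x = \<psi>v v x)
               \<and> (\<forall>e\<in>Ed. \<forall>x\<in>Se e. \<psi> x = \<psi>e e x)
               \<and> fs_morphism G (Sv vs) FTT H T E \<psi>'
               \<and> (\<forall>v\<in>V. \<forall>x\<in>Sv v. \<psi>' x = \<psi>v v x)
               \<and> (\<forall>e\<in>Ed. \<forall>x\<in>Se e. \<psi>' x = \<psi>e e x)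
               \<longrightarrow> (\<forall>x\<in>Sv vs. \<psi> x = \<psi>' x))"
    proof (intro allI impI conjI)
      fix H :: "('b, 'n) monoid_scheme" and T E and \<psi>v :: "'v \<Rightarrow> 'a \<Rightarrow> 'b" and \<psi>e :: "'v set \<Rightarrow> 'a \<Rightarrow> 'b"
      assume a: "fusion_system p H T E
          \<and> (\<forall>v\<in>V. fs_morphism G (Sv v) (Fv v) H T E (\<psi>v v))
          \<and> (\<forall>e\<in>Ed. fs_morphism G (Se e) (Fe e) H T E (\<psi>e e))
          \<and> (\<forall>e\<in>Ed. \<forall>v\<in>e. \<forall>x\<in>Se e. \<psi>e e x = \<psi>v v x)"
      have u: "fs_morphism G (Sv vs) FTT H T E (\<psi>v vs)
               \<and> (\<forall>v\<in>V. \<forall>x\<in>Sv v. \<psi>v vs x = \<psi>v v x)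
               \<and> (\<forall>e\<in>Ed. \<forall>x\<in>Se e. \<psi>v vs x = \<psi>e e x)"
        using a by (intro universal) auto
      then show "\<exists>\<psi>. fs_morphism G (Sv vs) FTT H T E \<psi>
               \<and> (\<forall>v\<in>V. \<forall>x\<in>Sv v. \<psi> x = \<psi>v v x)
               \<and> (\<forall>e\<in>Ed. \<forall>x\<in>Se e. \<psi> x = \<psi>e e x)" by blast
      fix \<psi> \<psi>'
      assume b: "fs_morphism G (Sv vs) FTT H T E \<psi>
               \<and> (\<forall>v\<in>V. \<forall>x\<in>Sv v. \<psi> x = \<psi>v v x)
               \<and> (\<forall>e\<in>Ed. \<forall>x\<in>Se e. \<psi> x = \<psi>e e x)
               \<and> fs_morphism G (Sv vs) FTT H T E \<psi>'
               \<and> (\<forall>v\<in>V. \<forall>x\<in>Sv v. \<psi>' x = \<psi>v v x)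
               \<and> (\<forall>e\<in>Ed. \<forall>x\<in>Se e. \<psi>' x = \<psi>e e x)"
      show "\<forall>x\<in>Sv vs. \<psi> x = \<psi>' x" using b vsV by simp
    qed
  qed
qed

end
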